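(* Let $\Omega\subset\mathbb{R}^3$ be a MAC compatible bounded domain, $(\mathcal M_n,\mathcal E_n)_{n\in\mathbb{N}}$ a sequence of MAC grids of $\Omega$ with $h_{\mathcal M_n}\to0$ and $\eta_{\mathcal M_n}\ge\eta>0$ for all $n$, and $1\le q<\infty$. Let $i,j\in\{1,2,3\}$ and $v\in L^q(\Omega)$. (a) If $v_n\in H^{(i)}_{\mathcal E_n,0}$ and $v_n\to v$ in $L^q(\Omega)$, then $\mathcal R^{(i,j)}_{\mathcal E_n}v_n\to v$ in $L^q(\Omega)$. (b) If $v_n\in H^{(i)}_{\mathcal E_n}$ and $v_n\to v$ in $L^q(\Omega)$, then $\mathcal R^{(i)}_{\mathcal M_n}v_n\to v$ in $L^q(\Omega)$.
   Context: MAC compatible domain: bounded connected open $\Omega$ whose closure is a finite union of closed rectangular parallelepipeds with faces orthogonal to $\boldsymbol e_1,\boldsymbol e_2,\boldsymbol e_3$. MAC grid $(\mathcal M,\mathcal E)$: structured partition $\mathcal M$ of $\Omega$ into rectangular parallelepipeds $K$; faces $\mathcal E$, $\mathcal E(K)$ faces of $K$, $\mathcal E^{(i)}$ faces orthogonal to $\boldsymbol e_i$ ($\mathcal E^{(i)}_{\rm int}$ interior ones); $\sigma=K|L$ common face; $D_{K,\sigma}$ half of $K$ adjacent to $\sigma$; dual cell $D_\sigma=D_{K,\sigma}\cup D_{L,\sigma}$ (interior) or $D_{K,\sigma}$ (boundary). $h_{\mathcal M}=\max\operatorname{diam}K$; $\eta_{\mathcal M}=\frac1{h_{\mathcal M}}\min_K\min_i\{|\boldsymbol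 x_\sigma-\boldsymbol x_{\sigma'}|:\sigma\ne\sigma'\in\mathcal E^{(i)}\cap\mathcal E(K)\}$ with $\boldsymbol x_\sigma$ the face mass centre. $L_{\mathcal M}$: piecewise constants on cells; $H^{(i)}_{\mathcal E}$: piecewise constants on $D_\sigma$, $\sigma\in\mathcal E^{(i)}$ (values $v_\sigma$); $H^{(i)}_{\mathcal E,0}$: those vanishing on boundary dual cells. Operators: $\mathcal R^{(i,j)}_{\mathcal E}:H^{(i)}_{\mathcal E,0}\to H^{(j)}_{\mathcal E,0}$, $\mathcal R^{(i,j)}_{\mathcal E}v=\sum_{\sigma\in\mathcal E^{(j)}_{\rm int}}(\mathcal R^{(i,j)}_{\mathcal E}v)_\sigma\mathbb 1_{D_\sigma}$ with $(\mathcal R^{(i,i)}_{\mathcal E}v)_\sigma=v_\sigma$ and, for $j\neq i$, $\sigma=K|L\in\mathcal E^{(j)}_{\rm int}$, $(\mathcal R^{(i,j)}_{\mathcal E}v)_\sigma=\frac14\sum\{v_{\sigma'}:\sigma'\in\mathcal E^{(i)}\cap(\mathcal E(K)\cup\mathcal E(L))\}$. $\mathcal R^{(i)}_{\mathcal M}:H^{(i)}_{\mathcal E}\to L_{\mathcal M}$, $(\mathcal R^{(i)}_{\mathcal M}v)|_K=\frac12\sum_{\sigma\in\mathcal E^{(i)}\cap\mathcal E(K)}v_\sigma$. *)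

theory Defs
  imports "HOL-Analysis.Analysis"
begin

definition MAC_compatible :: "(real^3) set \<Rightarrow> bool" where
  "MAC_compatible \<Omega> \<longleftrightarrow> open \<Omega> \<and> bounded \<Omega> \<and> connected \<Omega> \<and>
     (\<exists>B. finite B \<and> (\<forall>(a,b)\<in>B. \<forall>k. a$k < b$k) \<and>
          closure \<Omega> = (\<Union>(a,b)\<in>B. cbox a b))"

text \<open>A structured (tensor-product) grid: in direction k the grid nodes are
  gx k 0 < gx k 1 < ... < gx k (gN k).  Faces orthogonal to e_i are indexed by f :: 3 => nat where f i is a
  node index in direction i and f k (k ~= i) are cell indices.\<close>

record grid =
  gN :: "3 \<Rightarrow> nat"
  gx :: "3 \<Rightarrow> nat \<Rightarrow> real"

definition cell_ok :: "grid \<Rightarrow> (3 \<Rightarrow> nat) \<Rightarrow> bool" where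
  "cell_ok G c \<longleftrightarrow> (\<forall>k. c k < gN G k)"

definition cellbox :: "grid \<Rightarrow> (3 \<Rightarrow> nat) \<Rightarrow> (real^3) set" where
  "cellbox G c = {x. \<forall>k. gx G k (c k) < x$k \<and> x$k < gx G k (Suc (c k))}"

definition cellcbox :: "grid \<Rightarrow> (3 \<Rightarrow> nat) \<Rightarrow> (real^3) set" where
  "cellcbox G c = {x. \<forall>k. gx G k (c k) \<le> x$k \<and> x$k \<le> gx G k (Suc (c k))}"

definition mesh :: "(real^3) set \<Rightarrow> grid \<Rightarrow> (3 \<Rightarrow> nat) set" where
  "mesh \<Omega> G = {c. cell_ok G c \<and> cellbox G c \<subseteq> \<Omega>}"

definition is_MAC_grid :: "(real^3) set \<Rightarrow> grid \<Rightarrow> bool" where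
  "is_MAC_grid \<Omega> G \<longleftrightarrow> (\<forall>k. 1 \<le> gN G k \<and> strict_mono_on {0..gN G k} (gx G k)) \<and>
     closure \<Omega> = (\<Union>c\<in>mesh \<Omega> G. cellcbox G c)"

definition hM :: "(real^3) set \<Rightarrow> grid \<Rightarrow> real" where
  "hM \<Omega> G = Max ((\<lambda>c. diameter (cellbox G c)) ` mesh \<Omega> G)"

definition face_centre :: "grid \<Rightarrow> (3 \<Rightarrow> nat) \<Rightarrow> 3 \<Rightarrow> nat \<Rightarrow> real^3" where
  "face_centre G c k p =
     (\<chi> l. if l = k then gx G k p else (gx G l (c l) + gx G l (Suc (c l))) / 2)"

definition etaM :: "(real^3) set \<Rightarrow> grid \<Rightarrow> real" where
  "etaM \<Omega> G = (1 / hM \<Omega> G) *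
     Min {dist (face_centre G c k (c k)) (face_centre G c k (Suc (c k))) | c k. c \<in> mesh \<Omega> G}"

text \<open>Faces orthogonal to e_i.  The cell on the negative side of face f is
  f(i := f i - 1) (exists only if f i > 0), the one on the positive side is f.\<close>
definition has_low :: "(real^3) set \<Rightarrow> grid \<Rightarrow> 3 \<Rightarrow> (3 \<Rightarrow> nat) \<Rightarrow> bool" where
  "has_low \<Omega> G i f \<longleftrightarrow> 0 < f i \<and> f(i := f i - 1) \<in> mesh \<Omega> G"

definition has_up :: "(real^3) set \<Rightarrow> grid \<Rightarrow> 3 \<Rightarrow> (3 \<Rightarrow> nat) \<Rightarrow> bool" where
  "has_up \<Omega> G i f \<longleftrightarrow> f \<in> mesh \<Omega> G"

definition faces :: "(real^3) set \<Rightarrow> grid \<Rightarrow> 3 \<Rightarrow> (3 \<Rightarrow> nat) set" where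
  "faces \<Omega> G i = {f. has_low \<Omega> G i f \<or> has_up \<Omega> G i f}"

definition int_faces :: "(real^3) set \<Rightarrow> grid \<Rightarrow> 3 \<Rightarrow> (3 \<Rightarrow> nat) set" where
  "int_faces \<Omega> G i = {f. has_low \<Omega> G i f \<and> has_up \<Omega> G i f}"

definition midc :: "grid \<Rightarrow> (3 \<Rightarrow> nat) \<Rightarrow> 3 \<Rightarrow> real" where
  "midc G c i = (gx G i (c i) + gx G i (Suc (c i))) / 2"

definition dual :: "(real^3) set \<Rightarrow> grid \<Rightarrow> 3 \<Rightarrow> (3 \<Rightarrow> nat) \<Rightarrow> (real^3) set" where
  "dual \<Omega> G i f =
     (if has_low \<Omega> G i f then {x \<in> cellbox G (f(i := f i - 1)). midc G (f(i := f i - 1)) i < x$i}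
      else {}) \<union>
     (if has_up \<Omega> G i f then {x \<in> cellbox G f. x$i < midc G f i} else {})"

text \<open>Element of H^(i)_E with face values u.\<close>
definition disc_fun :: "(real^3) set \<Rightarrow> grid \<Rightarrow> 3 \<Rightarrow> ((3 \<Rightarrow> nat) \<Rightarrow> real) \<Rightarrow> real^3 \<Rightarrow> real" where
  "disc_fun \<Omega> G i u x = (\<Sum>f\<in>faces \<Omega> G i. u f * indicator (dual \<Omega> G i f) x)"

definition in_H0 :: "(real^3) set \<Rightarrow> grid \<Rightarrow> 3 \<Rightarrow> ((3 \<Rightarrow> nat) \<Rightarrow> real) \<Rightarrow> bool" where
  "in_H0 \<Omega> G i u \<longleftrightarrow> (\<forall>f\<in>faces \<Omega> G i - int_faces \<Omega> G i. u f = 0)"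

text \<open>Face values of R^(i,j)_E u on sigma = K|L in E^(j)_int, K = f(j := f j - 1), L = f;
  the four faces of K and L orthogonal to e_i are indexed by K, K(i:=K i+1), L, L(i:=L i+1).\<close>
definition R_EE_val :: "3 \<Rightarrow> 3 \<Rightarrow> ((3 \<Rightarrow> nat) \<Rightarrow> real) \<Rightarrow> (3 \<Rightarrow> nat) \<Rightarrow> real" where
  "R_EE_val i j u f =
     (if i = j then u f
      else (let K = f(j := f j - 1); L = f in
             (u K + u (K(i := Suc (K i))) + u L + u (L(i := Suc (L i)))) / 4))"

definition R_EE :: "(real^3) set \<Rightarrow> grid \<Rightarrow> 3 \<Rightarrow> 3 \<Rightarrow> ((3 \<Rightarrow> nat) \<Rightarrow> real) \<Rightarrow> real^3 \<Rightarrow> real" where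
  "R_EE \<Omega> G i j u x =
     (\<Sum>f\<in>int_faces \<Omega> G j. R_EE_val i j u f * indicator (dual \<Omega> G j f) x)"

definition R_M :: "(real^3) set \<Rightarrow> grid \<Rightarrow> 3 \<Rightarrow> ((3 \<Rightarrow> nat) \<Rightarrow> real) \<Rightarrow> real^3 \<Rightarrow> real" where
  "R_M \<Omega> G i u x =
     (\<Sum>c\<in>mesh \<Omega> G. (u c + u (c(i := Suc (c i)))) / 2 * indicator (cellbox G c) x)"

definition in_Lq :: "(real^3) set \<Rightarrow> real \<Rightarrow> (real^3 \<Rightarrow> real) \<Rightarrow> bool" where
  "in_Lq \<Omega> q v \<longleftrightarrow> v \<in> borel_measurable (lebesgue_on \<Omega>) \<and>
     (\<integral>\<^sup>+x\<in>\<Omega>. ennreal (\<bar>v x\<bar> powr q) \<partial>lebesgue) < \<infinity>"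

definition Lq_conv :: "(real^3) set \<Rightarrow> real \<Rightarrow> (nat \<Rightarrow> real^3 \<Rightarrow> real) \<Rightarrow> (real^3 \<Rightarrow> real) \<Rightarrow> bool" where
  "Lq_conv \<Omega> q fs g \<longleftrightarrow>
     (\<lambda>n. \<integral>\<^sup>+x\<in>\<Omega>. ennreal (\<bar>fs n x - g x\<bar> powr q) \<partial>lebesgue) \<longlonglongrightarrow> 0"

end

theory Submission
  imports Defs
begin

definition lo :: "grid \<Rightarrow> (3\<Rightarrow>nat) \<Rightarrow> real^3" where
  "lo G c = (\<chi> k. gx G k (c k))"
definition hi :: "grid \<Rightarrow> (3\<Rightarrow>nat) \<Rightarrow> real^3" where
  "hi G c = (\<chi> k. gx G k (Suc (c k)))"
definition plo :: "grid \<Rightarrow> (3\<Rightarrow>nat) \<Rightarrow> (3 \<Rightarrow> bool) \<Rightarrow> real^3" where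
  "plo G c s = (\<chi> k. if s k then midc G c k else gx G k (c k))"
definition phi :: "grid \<Rightarrow> (3\<Rightarrow>nat) \<Rightarrow> (3 \<Rightarrow> bool) \<Rightarrow> real^3" where
  "phi G c s = (\<chi> k. if s k then gx G k (Suc (c k)) else midc G c k)"
definition piece :: "grid \<Rightarrow> (3\<Rightarrow>nat) \<Rightarrow> (3 \<Rightarrow> bool) \<Rightarrow> (real^3) set" where
  "piece G c s = box (plo G c s) (phi G c s)"
definition wid :: "grid \<Rightarrow> (3\<Rightarrow>nat) \<Rightarrow> 3 \<Rightarrow> real" where
  "wid G c k = gx G k (Suc (c k)) - gx G k (c k)"
definition volc :: "grid \<Rightarrow> (3\<Rightarrow>nat) \<Rightarrow> real" where
  "volc G c = (\<Prod>k\<in>UNIV. wid G c k)"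

lemma gx_mono:
  assumes "is_MAC_grid \<Omega> G" "m \<le> m'" "m' \<le> gN G k"
  shows "gx G k m \<le> gx G k m'"
  using assms unfolding is_MAC_grid_def
  by (meson atLeastAtMost_iff le0 order_trans strict_mono_on_leD)

lemma gx_smono:
  assumes "is_MAC_grid \<Omega> G" "m < m'" "m' \<le> gN G k"
  shows "gx G k m < gx G k m'"
  using assms unfolding is_MAC_grid_def strict_mono_on_def
  by auto

lemma wid_pos:
  assumes "is_MAC_grid \<Omega> G" "cell_ok G c"
  shows "wid G c k > 0"
  using gx_smono[OF assms(1), of "c k" "Suc (c k)" k] assms(2)
  unfolding wid_def cell_ok_def by (simp add: Suc_leI)

lemma cellbox_box: "cellbox G c = box (lo G c) (hi G c)"
  unfolding cellbox_def lo_def hi_def by (auto simp: mem_box_cart)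

lemma cellcbox_cbox: "cellcbox G c = cbox (lo G c) (hi G c)"
  unfolding cellcbox_def lo_def hi_def by (auto simp: mem_box_cart)

lemma cellbox_disj:
  assumes "is_MAC_grid \<Omega> G" "cell_ok G c" "cell_ok G c'"
    "x \<in> cellbox G c" "x \<in> cellbox G c'"
  shows "c = c'"
proof (rule ext)
  fix k
  have A: "gx G k (c k) < x$k" "x$k < gx G k (Suc (c k))"
          "gx G k (c' k) < x$k" "x$k < gx G k (Suc (c' k))"
    using assms(4,5) unfolding cellbox_def by auto
  have B: "c k < gN G k" "c' k < gN G k" using assms(2,3) unfolding cell_ok_def by auto
  show "c k = c' k"
  proof (rule ccontr)
    assume "c k \<noteq> c' k"
    then consider "c k < c' k" | "c' k < c k" by linarith
    then show False
    proof cases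
      case 1
      then have "gx G k (Suc (c k)) \<le> gx G k (c' k)"
        using gx_mono[OF assms(1), of "Suc (c k)" "c' k" k] B by auto
      then show False using A by linarith
    next
      case 2
      then have "gx G k (Suc (c' k)) \<le> gx G k (c k)"
        using gx_mono[OF assms(1), of "Suc (c' k)" "c k" k] B by auto
      then show False using A by linarith
    qed
  qed
qed

lemma mem_piece:
  "x \<in> piece G c s \<longleftrightarrow> (\<forall>k. (if s k then midc G c k else gx G k (c k)) < x$k \<and>
       x$k < (if s k then gx G k (Suc (c k)) else midc G c k))"
  unfolding piece_def plo_def phi_def by (simp add: mem_box_cart)

lemma piece_sub:
  assumes "is_MAC_grid \<Omega> G" "cell_ok G c"
  shows "piece G c s \<subseteq> cellbox G c"
proof
  fix x assume x: "x \<in> piece G c s"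
  show "x \<in> cellbox G c"
    unfolding cellbox_def
  proof (safe)
    fix k
    have "wid G c k > 0" using wid_pos[OF assms] .
    then have "gx G k (c k) < midc G c k" "midc G c k < gx G k (Suc (c k))"
      unfolding wid_def midc_def by auto
    then show "gx G k (c k) < x $ k" "x $ k < gx G k (Suc (c k))"
      using x[unfolded mem_piece, rule_format, of k] by (auto split: if_splits)
  qed
qed

lemma piece_s:
  assumes "x \<in> piece G c s"
  shows "s k \<longleftrightarrow> midc G c k < x$k"
  using assms[unfolded mem_piece, rule_format, of k] by (auto split: if_splits)

lemma piece_unique:
  assumes "is_MAC_grid \<Omega> G" "cell_ok G c" "cell_ok G c'"
    "x \<in> piece G c s" "x \<in> piece G c' s'"
  shows "c = c' \<and> s = s'"
proof -
  have "c = c'" using cellbox_disj[OF assms(1-3)] piece_sub[OF assms(1,2)] piece_sub[OF assms(1,3)]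
    assms(4,5) by blast
  moreover have "s = s'" using piece_s[OF assms(4)] piece_s[OF assms(5)] \<open>c = c'\<close> by auto
  ultimately show ?thesis by auto
qed

lemma finite_bounded_funs: "finite {f :: 3 \<Rightarrow> nat. \<forall>k. f k \<le> N k}"
proof -
  have "{f :: 3 \<Rightarrow> nat. \<forall>k. f k \<le> N k} = Pi\<^sub>E UNIV (\<lambda>k. {..N k})"
    by (auto simp: PiE_def Pi_def)
  then show ?thesis by (simp add: finite_PiE)
qed

lemma finite_mesh: "finite (mesh \<Omega> G)"
  by (rule finite_subset[OF _ finite_bounded_funs[of "gN G"]])
     (auto simp: mesh_def cell_ok_def less_imp_le)

lemma finite_faces: "finite (faces \<Omega> G i)"
proof (rule finite_subset[OF _ finite_bounded_funs[of "gN G"]], safe)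
  fix f k assume "f \<in> faces \<Omega> G i"
  then consider "0 < f i" "f(i := f i - 1) \<in> mesh \<Omega> G" | "f \<in> mesh \<Omega> G"
    unfolding faces_def has_low_def has_up_def by auto
  then show "f k \<le> gN G k"
  proof cases
    case 1
    then have "(f(i := f i - 1)) k < gN G k" unfolding mesh_def cell_ok_def by auto
    then show ?thesis by (cases "k = i") auto
  next
    case 2 then show ?thesis unfolding mesh_def cell_ok_def by (simp add: less_imp_le)
  qed
qed

lemma finite_int_faces: "finite (int_faces \<Omega> G i)"
  by (rule finite_subset[OF _ finite_faces[of \<Omega> G i]]) (auto simp: int_faces_def faces_def)


lemma emeasure_box_cart:
  fixes a b :: "real^3"
  assumes "\<And>k. a$k \<le> b$k"
  shows "emeasure lebesgue (box a b) = ennreal (\<Prod>k\<in>UNIV. b$k - a$k)"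
proof -
  have "emeasure lebesgue (box a b) = emeasure lborel (box a b)" by simp
  also have "\<dots> = ennreal (\<Prod>bb\<in>Basis. (b - a) \<bullet> bb)"
    by (rule emeasure_lborel_box) (use assms in \<open>auto simp: Basis_vec_def cart_eq_inner_axis[symmetric]\<close>)
  also have "(\<Prod>bb\<in>Basis. (b - a) \<bullet> bb) = (\<Prod>k\<in>UNIV. b$k - a$k)"
    by (simp add: Basis_vec_def cart_eq_inner_axis axis_eq_axis prod.UNION_disjoint inner_diff_left)
  finally show ?thesis .
qed

definition pidx :: "(real^3) set \<Rightarrow> grid \<Rightarrow> ((3 \<Rightarrow> nat) \<times> (3 \<Rightarrow> bool)) set" where
  "pidx \<Omega> G = mesh \<Omega> G \<times> UNIV"

lemma finite_pidx: "finite (pidx \<Omega> G)"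
  unfolding pidx_def using finite_mesh by auto

lemma emeasure_piece:
  assumes G: "is_MAC_grid \<Omega> G" and c: "cell_ok G c"
  shows "emeasure lebesgue (piece G c s) = ennreal (volc G c / 8)"
proof -
  have w: "\<And>k. wid G c k > 0" using wid_pos[OF G c] .
  have "emeasure lebesgue (piece G c s) = ennreal (\<Prod>k\<in>UNIV. phi G c s $ k - plo G c s $ k)"
    unfolding piece_def
    by (rule emeasure_box_cart) (use w in \<open>auto simp: phi_def plo_def midc_def wid_def less_imp_le\<close>)
  also have "(\<Prod>k\<in>UNIV. phi G c s $ k - plo G c s $ k) = (\<Prod>k\<in>UNIV. wid G c k / 2)"
    by (rule prod.cong) (auto simp: phi_def plo_def midc_def wid_def field_simps)
  also have "\<dots> = volc G c / 8"
    by (simp add: volc_def prod_dividef)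
  finally show ?thesis .
qed

lemma volc_pos: "is_MAC_grid \<Omega> G \<Longrightarrow> cell_ok G c \<Longrightarrow> volc G c > 0"
  unfolding volc_def using wid_pos by (simp add: prod_pos)

lemma negligible_hyp_cart: "negligible {x::real^3. x$k = t}"
proof -
  have "negligible {x::real^3. x \<bullet> axis k 1 = t}"
    by (rule negligible_standard_hyperplane) simp
  then show ?thesis by (simp add: cart_eq_inner_axis)
qed

definition hyp :: "grid \<Rightarrow> (real^3) set" where
  "hyp G = (\<Union>k. \<Union>m\<in>{..gN G k}. {x. x$k = gx G k m}) \<union>
           (\<Union>k. \<Union>m\<in>{..gN G k}. {x. x$k = (gx G k m + gx G k (Suc m)) / 2})"

lemma negligible_UN_hyp: fixes N :: "3 \<Rightarrow> nat" shows "negligible (\<Union>k. \<Union>m\<in>{..N k}. {x::real^3. x$k = g k m})"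
proof -
  have A: "negligible (\<Union>m\<in>{..N k}. {x::real^3. x$k = g k m})" for k
    by (rule negligible_Union) (simp, auto intro: negligible_hyp_cart)
  show ?thesis by (rule negligible_Union) (use A in auto)
qed

lemma negligible_hyp: "negligible (hyp G)"
  unfolding hyp_def
  by (intro negligible_Un negligible_UN_hyp)

lemma hyp_null: "hyp G \<in> null_sets lebesgue"
  using negligible_hyp negligible_iff_null_sets by blast

lemma piece_sub_Omega:
  assumes G: "is_MAC_grid \<Omega> G" and c: "c \<in> mesh \<Omega> G"
  shows "piece G c s \<subseteq> \<Omega>"
  using piece_sub[OF G] c unfolding mesh_def by blast

lemma in_some_piece:
  assumes G: "is_MAC_grid \<Omega> G" and x: "x \<in> \<Omega>" "x \<notin> hyp G"
  obtains c s where "c \<in> mesh \<Omega> G" "x \<in> piece G c s"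
proof -
  have "x \<in> closure \<Omega>" using x closure_subset by blast
  then obtain c where c: "c \<in> mesh \<Omega> G" "x \<in> cellcbox G c"
    using G unfolding is_MAC_grid_def by auto
  have ck: "c k < gN G k" for k using c unfolding mesh_def cell_ok_def by auto
  have "x \<in> piece G c (\<lambda>k. midc G c k < x$k)"
    unfolding mem_piece
  proof
    fix k
    have ne: "x$k \<noteq> gx G k (c k)" "x$k \<noteq> gx G k (Suc (c k))" "x$k \<noteq> midc G c k"
      using x(2) ck[of k] unfolding hyp_def midc_def
      by (auto simp: Suc_leI less_imp_le)
    have "gx G k (c k) \<le> x$k" "x$k \<le> gx G k (Suc (c k))" using c(2) unfolding cellcbox_def by auto
    then show "(if midc G c k < x $ k then midc G c k else gx G k (c k)) < x $ k \<and>
          x $ k < (if midc G c k < x $ k then gx G k (Suc (c k)) else midc G c k)"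
      using ne by auto
  qed
  then show ?thesis using that c(1) by blast
qed

lemma indicator_decomp:
  assumes G: "is_MAC_grid \<Omega> G" and x: "x \<notin> hyp G"
  shows "(indicator \<Omega> x :: ennreal) = (\<Sum>p\<in>pidx \<Omega> G. indicator (piece G (fst p) (snd p)) x)"
proof (cases "x \<in> \<Omega>")
  case True
  obtain c s where cs: "c \<in> mesh \<Omega> G" "x \<in> piece G c s"
    using in_some_piece[OF G True x] .
  have "(\<Sum>p\<in>pidx \<Omega> G. indicator (piece G (fst p) (snd p)) x :: ennreal)
      = (\<Sum>p\<in>pidx \<Omega> G. if p = (c, s) then 1 else 0)"
  proof (rule sum.cong[OF refl])
    fix p assume p: "p \<in> pidx \<Omega> G"
    show "indicator (piece G (fst p) (snd p)) x = (if p = (c, s) then 1 else (0::ennreal))"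
    proof (cases "x \<in> piece G (fst p) (snd p)")
      case True
      then have "fst p = c \<and> snd p = s"
        using piece_unique[OF G _ _ True cs(2)] p cs(1) unfolding mesh_def pidx_def by auto
      then show ?thesis using True by (auto simp: prod_eq_iff)
    next
      case False then show ?thesis using cs by (auto simp: indicator_def)
    qed
  qed
  also have "\<dots> = 1" using cs(1) finite_pidx by (simp add: sum.delta' pidx_def)
  finally show ?thesis using True by simp
next
  case False
  then have "x \<notin> piece G c s" if "c \<in> mesh \<Omega> G" for c s
    using piece_sub_Omega[OF G that] by blast
  then show ?thesis using False by (auto intro!: sum.neutral simp: indicator_def pidx_def)
qed

lemma decomp:
  assumes G: "is_MAC_grid \<Omega> G" and F: "F \<in> borel_measurable lebesgue"
  shows "(\<integral>\<^sup>+x\<in>\<Omega>. F x \<partial>lebesgue) =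
     (\<Sum>p\<in>pidx \<Omega> G. \<integral>\<^sup>+x\<in>piece G (fst p) (snd p). F x \<partial>lebesgue)"
proof -
  have "(\<integral>\<^sup>+x\<in>\<Omega>. F x \<partial>lebesgue) =
        (\<integral>\<^sup>+x. (\<Sum>p\<in>pidx \<Omega> G. F x * indicator (piece G (fst p) (snd p)) x) \<partial>lebesgue)"
  proof (rule nn_integral_cong_AE)
    show "AE x in lebesgue. F x * indicator \<Omega> x =
       (\<Sum>p\<in>pidx \<Omega> G. F x * indicator (piece G (fst p) (snd p)) x)"
      using AE_not_in[OF hyp_null[of G]]
      by eventually_elim (simp add: indicator_decomp[OF G] sum_distrib_left)
  qed
  also have "\<dots> = (\<Sum>p\<in>pidx \<Omega> G. \<integral>\<^sup>+x\<in>piece G (fst p) (snd p). F x \<partial>lebesgue)"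
    by (rule nn_integral_sum) (use F in \<open>auto simp: piece_def intro!: borel_measurable_times_ennreal borel_measurable_indicator\<close>)
  finally show ?thesis .
qed


definition fsel :: "(3 \<Rightarrow> nat) \<Rightarrow> (3 \<Rightarrow> bool) \<Rightarrow> 3 \<Rightarrow> (3 \<Rightarrow> nat)" where
  "fsel c s d = (if s d then c(d := Suc (c d)) else c)"

lemma mesh_cell_ok: "c \<in> mesh \<Omega> G \<Longrightarrow> cell_ok G c"
  unfolding mesh_def by auto

lemma piece_cellbox:
  assumes G: "is_MAC_grid \<Omega> G" and c: "c \<in> mesh \<Omega> G" and x: "x \<in> piece G c s"
    and c': "c' \<in> mesh \<Omega> G"
  shows "x \<in> cellbox G c' \<longleftrightarrow> c' = c"
  using cellbox_disj[OF G mesh_cell_ok[OF c] mesh_cell_ok[OF c']] piece_sub[OF G mesh_cell_ok[OF c]] x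
  by blast

lemma dual_mem:
  assumes G: "is_MAC_grid \<Omega> G" and c: "c \<in> mesh \<Omega> G" and x: "x \<in> piece G c s"
  shows "x \<in> dual \<Omega> G d f \<longleftrightarrow> f = fsel c s d"
proof -
  have xc: "x \<in> cellbox G c" using piece_sub[OF G mesh_cell_ok[OF c]] x by blast
  have sd: "s d \<longleftrightarrow> midc G c d < x$d" using piece_s[OF x] .
  have sd2: "\<not> s d \<Longrightarrow> x$d < midc G c d" using x[unfolded mem_piece, rule_format, of d] by auto
  show ?thesis
  proof
    assume "x \<in> dual \<Omega> G d f"
    then consider
      "has_low \<Omega> G d f" "x \<in> cellbox G (f(d := f d - 1))" "midc G (f(d := f d - 1)) d < x$d"
      | "has_up \<Omega> G d f" "x \<in> cellbox G f" "x$d < midc G f d"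
      unfolding dual_def by (auto split: if_splits)
    then show "f = fsel c s d"
    proof cases
      case 1
      then have e: "f(d := f d - 1) = c" using piece_cellbox[OF G c x] unfolding has_low_def by blast
      have "f d > 0" using 1 unfolding has_low_def by auto
      then have "f = c(d := Suc (c d))" using e by (auto simp: fun_eq_iff split: if_splits)
      moreover have "s d" using sd 1(3) e by simp
      ultimately show ?thesis unfolding fsel_def by simp
    next
      case 2
      then have e: "f = c" using piece_cellbox[OF G c x] unfolding has_up_def by blast
      then have "\<not> s d" using sd 2(3) by simp
      then show ?thesis unfolding fsel_def using e by simp
    qed
  next
    assume f: "f = fsel c s d"
    show "x \<in> dual \<Omega> G d f"
    proof (cases "s d")
      case True
      then have ff: "f = c(d := Suc (c d))" using f unfolding fsel_def by simp
      have "f(d := f d - 1) = c" using ff by (auto simp: fun_eq_iff)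
      then have "has_low \<Omega> G d f" unfolding has_low_def using c ff by simp
      then show ?thesis unfolding dual_def using \<open>f(d := f d - 1) = c\<close> xc sd True by auto
    next
      case False
      then have ff: "f = c" using f unfolding fsel_def by simp
      then have "has_up \<Omega> G d f" unfolding has_up_def using c by simp
      then show ?thesis unfolding dual_def using ff xc sd2 False by auto
    qed
  qed
qed

lemma fsel_faces:
  assumes c: "c \<in> mesh \<Omega> G"
  shows "fsel c s d \<in> faces \<Omega> G d"
proof (cases "s d")
  case True
  have "(c(d := Suc (c d)))(d := Suc (c d) - 1) = c" by (auto simp: fun_eq_iff)
  then show ?thesis using True c unfolding fsel_def faces_def has_low_def by auto
next
  case False
  then show ?thesis using c unfolding fsel_def faces_def has_up_def by auto
qed

lemma disc_val:
  assumes G: "is_MAC_grid \<Omega> G" and c: "c \<in> mesh \<Omega> G" and x: "x \<in> piece G c s"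
  shows "disc_fun \<Omega> G i u x = u (fsel c s i)"
proof -
  have "disc_fun \<Omega> G i u x = (\<Sum>f\<in>faces \<Omega> G i. if f = fsel c s i then u (fsel c s i) else 0)"
    unfolding disc_fun_def
    by (rule sum.cong[OF refl]) (auto simp: indicator_def dual_mem[OF G c x])
  also have "\<dots> = u (fsel c s i)"
    using fsel_faces[OF c] finite_faces by (simp add: sum.delta')
  finally show ?thesis .
qed

lemma REE_val:
  assumes G: "is_MAC_grid \<Omega> G" and c: "c \<in> mesh \<Omega> G" and x: "x \<in> piece G c s"
  shows "R_EE \<Omega> G i j u x =
    (if fsel c s j \<in> int_faces \<Omega> G j then R_EE_val i j u (fsel c s j) else 0)"
proof -
  have "R_EE \<Omega> G i j u x = (\<Sum>f\<in>int_faces \<Omega> G j. if f = fsel c s j then R_EE_val i j u (fsel c s j) else 0)"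
    unfolding R_EE_def
    by (rule sum.cong[OF refl]) (auto simp: indicator_def dual_mem[OF G c x])
  also have "\<dots> = (if fsel c s j \<in> int_faces \<Omega> G j then R_EE_val i j u (fsel c s j) else 0)"
    using finite_int_faces by (simp add: sum.delta')
  finally show ?thesis .
qed

lemma RM_val:
  assumes G: "is_MAC_grid \<Omega> G" and c: "c \<in> mesh \<Omega> G" and x: "x \<in> piece G c s"
  shows "R_M \<Omega> G i u x = (u c + u (c(i := Suc (c i)))) / 2"
proof -
  have "R_M \<Omega> G i u x = (\<Sum>c'\<in>mesh \<Omega> G. if c' = c then (u c + u (c(i := Suc (c i)))) / 2 else 0)"
    unfolding R_M_def
    by (rule sum.cong[OF refl]) (auto simp: indicator_def piece_cellbox[OF G c x])
  also have "\<dots> = (u c + u (c(i := Suc (c i)))) / 2"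
    using finite_mesh c by (simp add: sum.delta')
  finally show ?thesis .
qed


lemma powr_convex0:
  assumes q: "q \<ge> (1::real)"
  shows "convex_on {0..} (\<lambda>x::real. x powr q)"
proof (rule convex_onI)
  show "convex {0::real..}" by simp
  fix t x y :: real assume t: "0 < t" "t < 1" and xy: "x \<in> {0..}" "y \<in> {0..}"
  show "((1 - t) *\<^sub>R x + t *\<^sub>R y) powr q \<le> (1 - t) * x powr q + t * y powr q"
  proof (cases "x = 0 \<or> y = 0")
    case True
    then show ?thesis
    proof
      assume x0: "x = 0"
      have "(t * y) powr q = t powr q * y powr q" using t xy by (simp add: powr_mult)
      also have "\<dots> \<le> t * y powr q"
        by (rule mult_right_mono) (use t q powr_le_one_le in auto)
      finally show ?thesis using x0 q by simp
    next
      assume y0: "y = 0"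
      have "((1 - t) * x) powr q = (1 - t) powr q * x powr q" using t xy by (simp add: powr_mult)
      also have "\<dots> \<le> (1 - t) * x powr q"
        by (rule mult_right_mono) (use t q powr_le_one_le in auto)
      finally show ?thesis using y0 q by simp
    qed
  next
    case False
    then have "x \<in> {0<..}" "y \<in> {0<..}" using xy by auto
    from convex_onD[OF powr_convex[OF q], of t x y] this t
    show ?thesis by simp
  qed
qed

lemma avg_pow:
  fixes z :: "'k \<Rightarrow> real"
  assumes K: "finite K" "K \<noteq> {}" and q: "q \<ge> 1"
  shows "\<bar>(\<Sum>k\<in>K. z k) / card K\<bar> powr q \<le> (\<Sum>k\<in>K. \<bar>z k\<bar> powr q) / card K"
proof -
  have cK: "real (card K) > 0" using K by (simp add: card_gt_0_iff)
  have "\<bar>(\<Sum>k\<in>K. z k) / card K\<bar> \<le> (\<Sum>k\<in>K. (1 / card K) *\<^sub>R \<bar>z k\<bar>)"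
    using cK by (simp add: sum_divide_distrib[symmetric]) (rule divide_right_mono[OF sum_abs], simp)
  then have "\<bar>(\<Sum>k\<in>K. z k) / card K\<bar> powr q \<le> (\<Sum>k\<in>K. (1 / card K) *\<^sub>R \<bar>z k\<bar>) powr q"
    using q by (intro powr_mono2) auto
  also have "\<dots> \<le> (\<Sum>k\<in>K. (1 / card K) * \<bar>z k\<bar> powr q)"
    by (rule convex_on_sum[OF K powr_convex0[OF q]]) (use cK in auto)
  also have "\<dots> = (\<Sum>k\<in>K. \<bar>z k\<bar> powr q) / card K"
    by (simp add: sum_divide_distrib)
  finally show ?thesis .
qed

lemma two_pow:
  fixes a b q :: real
  assumes q: "q \<ge> 1"
  shows "\<bar>a + b\<bar> powr q \<le> 2 powr (q - 1) * (\<bar>a\<bar> powr q + \<bar>b\<bar> powr q)"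
proof -
  have "\<bar>(\<Sum>k\<in>{0::nat,1}. (if k = 0 then a else b)) / card {0::nat,1}\<bar> powr q
      \<le> (\<Sum>k\<in>{0::nat,1}. \<bar>if k = 0 then a else b\<bar> powr q) / card {0::nat,1}"
    by (rule avg_pow) (use q in auto)
  then have *: "\<bar>(a + b) / 2\<bar> powr q \<le> (\<bar>a\<bar> powr q + \<bar>b\<bar> powr q) / 2" by simp
  have "\<bar>a + b\<bar> powr q = 2 powr q * \<bar>(a + b) / 2\<bar> powr q"
    by (simp add: powr_mult[symmetric])
  also have "\<dots> \<le> 2 powr q * ((\<bar>a\<bar> powr q + \<bar>b\<bar> powr q) / 2)"
    by (rule mult_left_mono[OF *]) simp
  also have "\<dots> = 2 powr (q - 1) * (\<bar>a\<bar> powr q + \<bar>b\<bar> powr q)"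
    by (simp add: powr_diff)
  finally show ?thesis .
qed

lemma piece_bound:
  fixes \<phi> w R :: "real^3 \<Rightarrow> real" and cv :: "'k \<Rightarrow> real"
    and A :: "'k \<Rightarrow> (real^3) set" and \<alpha> :: "'k \<Rightarrow> real"
  assumes q: "q \<ge> 1" and \<epsilon>: "\<epsilon> \<ge> 0"
    and pm: "p \<in> sets lebesgue" and P: "emeasure lebesgue p = ennreal P" "P \<ge> 0"
    and K: "finite K" "K \<noteq> {}"
    and Am: "\<And>k. k\<in>K \<Longrightarrow> A k \<in> sets lebesgue"
      "\<And>k. k\<in>K \<Longrightarrow> emeasure lebesgue (A k) = ennreal (\<alpha> k)" "\<And>k. k\<in>K \<Longrightarrow> \<alpha> k > 0"
    and wc: "\<And>k y. k\<in>K \<Longrightarrow> y \<in> A k \<Longrightarrow> w y = cv k"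
    and Rc: "\<And>x. x\<in>p \<Longrightarrow> R x = (\<Sum>k\<in>K. cv k) / card K"
    and close: "\<And>k x y. k\<in>K \<Longrightarrow> x\<in>p \<Longrightarrow> y\<in>A k \<Longrightarrow> \<bar>\<phi> x - \<phi> y\<bar> \<le> \<epsilon>"
    and meas: "\<phi> \<in> borel_measurable lebesgue" "w \<in> borel_measurable lebesgue"
  shows "(\<integral>\<^sup>+x\<in>p. ennreal (\<bar>R x - \<phi> x\<bar> powr q) \<partial>lebesgue) \<le>
    ennreal (2 powr (q - 1)) * (ennreal (P * \<epsilon> powr q) +
      (\<Sum>k\<in>K. ennreal (P / (card K * \<alpha> k)) *
          (\<integral>\<^sup>+y\<in>A k. ennreal (\<bar>w y - \<phi> y\<bar> powr q) \<partial>lebesgue)))"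
proof -
  define C where "C = (2::real) powr (q - 1)"
  have C0: "C \<ge> 0" unfolding C_def by simp
  define I where "I k = (\<integral>\<^sup>+y\<in>A k. ennreal (\<bar>w y - \<phi> y\<bar> powr q) \<partial>lebesgue)" for k
  have cK: "real (card K) > 0" using K by (simp add: card_gt_0_iff)
  have step1: "ennreal (\<alpha> k * \<bar>cv k - \<phi> x\<bar> powr q) \<le> ennreal C * (I k + ennreal (\<alpha> k * \<epsilon> powr q))"
    if k: "k \<in> K" and x: "x \<in> p" for k x
  proof -
    have "ennreal (\<alpha> k * \<bar>cv k - \<phi> x\<bar> powr q) = ennreal (\<bar>cv k - \<phi> x\<bar> powr q) * emeasure lebesgue (A k)"
      using Am(2)[OF k] Am(3)[OF k] by (simp add: ennreal_mult mult.commute)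
    also have "\<dots> = (\<integral>\<^sup>+y. ennreal (\<bar>cv k - \<phi> x\<bar> powr q) * indicator (A k) y \<partial>lebesgue)"
      by (rule nn_integral_cmult_indicator[symmetric]) (rule Am(1)[OF k])
    also have "\<dots> \<le> (\<integral>\<^sup>+y. (ennreal C * (ennreal (\<bar>w y - \<phi> y\<bar> powr q) + ennreal (\<epsilon> powr q))) * indicator (A k) y \<partial>lebesgue)"
    proof (rule nn_integral_mono)
      fix y
      show "ennreal (\<bar>cv k - \<phi> x\<bar> powr q) * indicator (A k) y \<le>
          (ennreal C * (ennreal (\<bar>w y - \<phi> y\<bar> powr q) + ennreal (\<epsilon> powr q))) * indicator (A k) y"
      proof (cases "y \<in> A k")
        case True
        have "\<bar>cv k - \<phi> x\<bar> powr q = \<bar>(w y - \<phi> y) + (\<phi> y - \<phi> x)\<bar> powr q"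
          using wc[OF k True] by simp
        also have "\<dots> \<le> C * (\<bar>w y - \<phi> y\<bar> powr q + \<bar>\<phi> y - \<phi> x\<bar> powr q)"
          unfolding C_def by (rule two_pow[OF q])
        also have "\<dots> \<le> C * (\<bar>w y - \<phi> y\<bar> powr q + \<epsilon> powr q)"
          using close[OF k x True] q C0
          by (intro mult_left_mono add_left_mono powr_mono2) auto
        finally have "ennreal (\<bar>cv k - \<phi> x\<bar> powr q) \<le> ennreal (C * (\<bar>w y - \<phi> y\<bar> powr q + \<epsilon> powr q))"
          by (rule ennreal_leI)
        then show ?thesis using True C0 by (simp add: ennreal_mult)
      qed simp
    qed
    also have "\<dots> = ennreal C * ((\<integral>\<^sup>+y. ennreal (\<bar>w y - \<phi> y\<bar> powr q) * indicator (A k) y \<partial>lebesgue)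
         + (\<integral>\<^sup>+y. ennreal (\<epsilon> powr q) * indicator (A k) y \<partial>lebesgue))"
      using meas Am(1)[OF k]
      by (simp add: nn_integral_cmult nn_integral_add distrib_right mult.assoc)
    also have "\<dots> = ennreal C * (I k + ennreal (\<alpha> k * \<epsilon> powr q))"
      using Am[OF k] by (simp add: nn_integral_cmult_indicator I_def ennreal_mult mult.commute)
    finally show ?thesis .
  qed
  define B where "B = (\<Sum>k\<in>K. ennreal (1 / (card K * \<alpha> k)) * (ennreal C * (I k + ennreal (\<alpha> k * \<epsilon> powr q))))"
  have step2: "ennreal (\<bar>R x - \<phi> x\<bar> powr q) \<le> B" if x: "x \<in> p" for x
  proof -
    have "R x - \<phi> x = (\<Sum>k\<in>K. cv k - \<phi> x) / card K"
      using Rc[OF x] cK by (simp add: sum_subtractf diff_divide_distrib)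
    then have "\<bar>R x - \<phi> x\<bar> = \<bar>(\<Sum>k\<in>K. cv k - \<phi> x) / card K\<bar>" by simp
    then have "\<bar>R x - \<phi> x\<bar> powr q \<le> (\<Sum>k\<in>K. \<bar>cv k - \<phi> x\<bar> powr q) / card K"
      using avg_pow[OF K q, of "\<lambda>k. cv k - \<phi> x"] by simp
    also have "\<dots> = (\<Sum>k\<in>K. (1 / (card K * \<alpha> k)) * (\<alpha> k * \<bar>cv k - \<phi> x\<bar> powr q))"
      using Am(3) by (auto simp: sum_divide_distrib intro!: sum.cong) (metis less_irrefl)
    finally have "ennreal (\<bar>R x - \<phi> x\<bar> powr q) \<le>
        ennreal (\<Sum>k\<in>K. (1 / (card K * \<alpha> k)) * (\<alpha> k * \<bar>cv k - \<phi> x\<bar> powr q))"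
      by (rule ennreal_leI)
    also have "\<dots> = (\<Sum>k\<in>K. ennreal (1 / (card K * \<alpha> k)) * ennreal (\<alpha> k * \<bar>cv k - \<phi> x\<bar> powr q))"
    proof -
      have nn: "0 \<le> (1 / (card K * \<alpha> k)) * (\<alpha> k * \<bar>cv k - \<phi> x\<bar> powr q)" if "k \<in> K" for k
        using Am(3)[OF that] by simp
      have "ennreal (\<Sum>k\<in>K. (1 / (card K * \<alpha> k)) * (\<alpha> k * \<bar>cv k - \<phi> x\<bar> powr q))
          = (\<Sum>k\<in>K. ennreal ((1 / (card K * \<alpha> k)) * (\<alpha> k * \<bar>cv k - \<phi> x\<bar> powr q)))"
        by (rule sum_ennreal[symmetric]) (rule nn)
      also have "\<dots> = (\<Sum>k\<in>K. ennreal (1 / (card K * \<alpha> k)) * ennreal (\<alpha> k * \<bar>cv k - \<phi> x\<bar> powr q))"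
        by (rule sum.cong[OF refl], rule ennreal_mult) (auto intro!: mult_nonneg_nonneg simp: order_less_imp_le[OF Am(3)])
      finally show ?thesis .
    qed
    also have "\<dots> \<le> B"
      unfolding B_def
      by (intro sum_mono mult_left_mono step1 x) auto
    finally show ?thesis .
  qed
  have "(\<integral>\<^sup>+x\<in>p. ennreal (\<bar>R x - \<phi> x\<bar> powr q) \<partial>lebesgue) \<le> (\<integral>\<^sup>+x. B * indicator p x \<partial>lebesgue)"
    by (rule nn_integral_mono) (auto simp: indicator_def step2)
  also have "\<dots> = B * ennreal P" using pm P by (simp add: nn_integral_cmult_indicator)
  also have "\<dots> = ennreal C * (ennreal (P * \<epsilon> powr q) + (\<Sum>k\<in>K. ennreal (P / (card K * \<alpha> k)) * I k))"
  proof -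
    have e1: "ennreal (1 / (card K * \<alpha> k)) * ennreal (\<alpha> k * \<epsilon> powr q) * ennreal P
        = ennreal (P * \<epsilon> powr q / card K)" if k: "k \<in> K" for k
      using Am(3)[OF k] cK P(2) by (simp add: ennreal_mult[symmetric] field_simps)
    have e2: "ennreal (1 / (card K * \<alpha> k)) * I k * ennreal P = ennreal (P / (card K * \<alpha> k)) * I k"
      if k: "k \<in> K" for k
    proof -
      have "ennreal (1 / (card K * \<alpha> k)) * ennreal P = ennreal (P / (card K * \<alpha> k))"
        using Am(3)[OF k] cK P(2) by (subst ennreal_mult[symmetric]) auto
      then show ?thesis by (metis mult.assoc mult.commute)
    qed
    have "B * ennreal P = ennreal C * (\<Sum>k\<in>K. ennreal (1 / (card K * \<alpha> k)) * I k * ennreal P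
          + ennreal (1 / (card K * \<alpha> k)) * ennreal (\<alpha> k * \<epsilon> powr q) * ennreal P)"
      unfolding B_def by (simp add: sum_distrib_left sum_distrib_right distrib_left distrib_right mult_ac)
    also have "\<dots> = ennreal C * (\<Sum>k\<in>K. ennreal (P / (card K * \<alpha> k)) * I k + ennreal (P * \<epsilon> powr q / card K))"
      using e1 e2 by (simp cong: sum.cong)
    also have "(\<Sum>k\<in>K. ennreal (P * \<epsilon> powr q / card K)) = ennreal (P * \<epsilon> powr q)"
      using cK P(2) by (subst sum_ennreal) auto
    then have "(\<Sum>k\<in>K. ennreal (P / (card K * \<alpha> k)) * I k + ennreal (P * \<epsilon> powr q / card K))
       = ennreal (P * \<epsilon> powr q) + (\<Sum>k\<in>K. ennreal (P / (card K * \<alpha> k)) * I k)"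
      by (simp add: sum.distrib add.commute)
    finally show ?thesis by simp
  qed
  finally show ?thesis unfolding C_def I_def .
qed


lemma mesh_nonempty:
  assumes G: "is_MAC_grid \<Omega> G" and ne: "\<Omega> \<noteq> {}"
  shows "mesh \<Omega> G \<noteq> {}"
proof -
  have "closure \<Omega> \<noteq> {}" using ne closure_subset by blast
  then show ?thesis using G unfolding is_MAC_grid_def by auto
qed

lemma wid_le_diam:
  assumes G: "is_MAC_grid \<Omega> G" and c: "cell_ok G c"
  shows "wid G c k \<le> diameter (cellbox G c)"
proof -
  have w: "\<And>k. wid G c k > 0" using wid_pos[OF G c] .
  have le: "\<forall>i\<in>Basis. lo G c \<bullet> i \<le> hi G c \<bullet> i"
    using w by (auto simp: Basis_vec_def cart_eq_inner_axis[symmetric] lo_def hi_def wid_def less_imp_le)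
  have ne: "box (lo G c) (hi G c) \<noteq> {}"
    using w by (auto simp: box_ne_empty Basis_vec_def cart_eq_inner_axis[symmetric] lo_def hi_def wid_def)
  have "diameter (cellbox G c) = diameter (closure (box (lo G c) (hi G c)))"
    by (simp add: cellbox_box diameter_closure)
  also have "\<dots> = dist (lo G c) (hi G c)"
    using ne le by (simp add: diameter_cbox)
  finally have d: "diameter (cellbox G c) = norm (lo G c - hi G c)" by (simp add: dist_norm)
  have "\<bar>(lo G c - hi G c) $ k\<bar> \<le> norm (lo G c - hi G c)" by (rule component_le_norm_cart)
  then show ?thesis using d w[of k] by (simp add: lo_def hi_def wid_def)
qed

lemma finite_diam: "finite ((\<lambda>c. diameter (cellbox G c)) ` mesh \<Omega> G)"
  using finite_mesh by simp

lemma wid_le_hM: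
  assumes G: "is_MAC_grid \<Omega> G" and c: "c \<in> mesh \<Omega> G"
  shows "wid G c k \<le> hM \<Omega> G"
proof -
  have "diameter (cellbox G c) \<le> hM \<Omega> G"
    unfolding hM_def by (rule Max_ge[OF finite_diam]) (use c in auto)
  then show ?thesis using wid_le_diam[OF G mesh_cell_ok[OF c], of k] by linarith
qed

lemma hM_pos:
  assumes G: "is_MAC_grid \<Omega> G" and ne: "\<Omega> \<noteq> {}"
  shows "hM \<Omega> G > 0"
proof -
  obtain c where c: "c \<in> mesh \<Omega> G" using mesh_nonempty[OF G ne] by blast
  have "wid G c 0 > 0" using wid_pos[OF G mesh_cell_ok[OF c]] .
  then show ?thesis using wid_le_hM[OF G c, of 0] by linarith
qed

lemma face_centre_dist:
  "dist (face_centre G c k (c k)) (face_centre G c k (Suc (c k))) = \<bar>wid G c k\<bar>"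
proof -
  let ?v = "face_centre G c k (c k) - face_centre G c k (Suc (c k))"
  have "norm ?v \<le> (\<Sum>i\<in>UNIV. \<bar>?v $ i\<bar>)" by (rule norm_le_l1_cart)
  also have "(\<Sum>i\<in>UNIV. \<bar>?v $ i\<bar>) = (\<Sum>i\<in>UNIV. if i = k then \<bar>wid G c k\<bar> else 0)"
    by (rule sum.cong) (auto simp: face_centre_def wid_def)
  also have "\<dots> = \<bar>wid G c k\<bar>" by simp
  finally have a: "norm ?v \<le> \<bar>wid G c k\<bar>" .
  have "\<bar>?v $ k\<bar> \<le> norm ?v" by (rule component_le_norm_cart)
  then have b: "\<bar>wid G c k\<bar> \<le> norm ?v" by (simp add: face_centre_def wid_def)
  show ?thesis using a b by (simp add: dist_norm)
qed

lemma wid_ge_eta: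
  assumes G: "is_MAC_grid \<Omega> G" and ne: "\<Omega> \<noteq> {}" and c: "c \<in> mesh \<Omega> G"
    and eta: "etaM \<Omega> G \<ge> \<eta>"
  shows "wid G c k \<ge> \<eta> * hM \<Omega> G"
proof -
  define S where "S = {dist (face_centre G c k (c k)) (face_centre G c k (Suc (c k))) | c k. c \<in> mesh \<Omega> G}"
  have "S = (\<lambda>(c,k). dist (face_centre G c k (c k)) (face_centre G c k (Suc (c k)))) ` (mesh \<Omega> G \<times> UNIV)"
    unfolding S_def by auto
  then have fS: "finite S" using finite_mesh by simp
  have "wid G c k \<in> S" unfolding S_def using c face_centre_dist wid_pos[OF G mesh_cell_ok[OF c], of k]
    by (metis (mono_tags, lifting) abs_of_pos mem_Collect_eq)
  then have m: "Min S \<le> wid G c k" using fS by simp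
  have h: "hM \<Omega> G > 0" using hM_pos[OF G ne] .
  have "\<eta> \<le> Min S / hM \<Omega> G" using eta unfolding etaM_def S_def by simp
  then have "\<eta> * hM \<Omega> G \<le> Min S" using h by (simp add: pos_le_divide_eq)
  then show ?thesis using m by linarith
qed

lemma coord_close:
  assumes G: "is_MAC_grid \<Omega> G" and c: "c \<in> mesh \<Omega> G" and c': "c' \<in> mesh \<Omega> G"
    and x: "x \<in> cellcbox G c" and y: "y \<in> cellcbox G c'"
    and o1: "gx G k (c' k) \<le> gx G k (Suc (c k))" and o2: "gx G k (c k) \<le> gx G k (Suc (c' k))"
  shows "\<bar>x$k - y$k\<bar> \<le> wid G c k + wid G c' k"
proof -
  have a: "gx G k (c k) \<le> x$k" "x$k \<le> gx G k (Suc (c k))" using x unfolding cellcbox_def by auto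
  have b: "gx G k (c' k) \<le> y$k" "y$k \<le> gx G k (Suc (c' k))" using y unfolding cellcbox_def by auto
  show ?thesis unfolding abs_le_iff wid_def using a b o1 o2 by (intro conjI; linarith)
qed

lemma dist_nb:
  assumes G: "is_MAC_grid \<Omega> G" and c: "c \<in> mesh \<Omega> G" and c': "c' \<in> mesh \<Omega> G"
    and x: "x \<in> cellcbox G c" and y: "y \<in> cellcbox G c'"
    and same: "\<And>k. k \<noteq> j \<Longrightarrow> c' k = c k"
    and nb: "c' j = c j \<or> c' j = Suc (c j) \<or> Suc (c' j) = c j"
  shows "dist x y \<le> 4 * hM \<Omega> G"
proof -
  have ok: "c k < gN G k" "c' k < gN G k" for k
    using c c' unfolding mesh_def cell_ok_def by auto
  have b: "\<bar>x$k - y$k\<bar> \<le> (if k = j then 2 * hM \<Omega> G else hM \<Omega> G)" for k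
  proof (cases "k = j")
    case True
    have "gx G k (c' k) \<le> gx G k (Suc (c k))"
      using nb True gx_mono[OF G, of "c' k" "Suc (c k)" k] ok[of k] by (auto simp: Suc_leI)
    moreover have "gx G k (c k) \<le> gx G k (Suc (c' k))"
      using nb True gx_mono[OF G, of "c k" "Suc (c' k)" k] ok[of k] by (auto simp: Suc_leI)
    ultimately have "\<bar>x$k - y$k\<bar> \<le> wid G c k + wid G c' k"
      by (rule coord_close[OF G c c' x y])
    then show ?thesis using wid_le_hM[OF G c, of k] wid_le_hM[OF G c', of k] True by simp
  next
    case False
    then have "c' k = c k" using same by simp
    have a: "gx G k (c k) \<le> x$k" "x$k \<le> gx G k (Suc (c k))" using x unfolding cellcbox_def by auto
    have b: "gx G k (c' k) \<le> y$k" "y$k \<le> gx G k (Suc (c' k))" using y unfolding cellcbox_def by auto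
    have "\<bar>x$k - y$k\<bar> \<le> wid G c k"
      unfolding abs_le_iff wid_def using a b \<open>c' k = c k\<close> by (intro conjI; simp; linarith)
    then show ?thesis using wid_le_hM[OF G c, of k] False by simp
  qed
  have "dist x y \<le> (\<Sum>k\<in>UNIV. \<bar>(x - y)$k\<bar>)" unfolding dist_norm by (rule norm_le_l1_cart)
  also have "\<dots> \<le> (\<Sum>k\<in>UNIV. (if k = j then 2 * hM \<Omega> G else hM \<Omega> G))"
    by (rule sum_mono) (use b in simp)
  also have "\<dots> = 4 * hM \<Omega> G"
  proof -
    have c2: "card (- {j::3}) = 2" by (simp add: Compl_eq_Diff_UNIV card_Diff_singleton)
    show ?thesis using c2 by (simp add: sum.remove[of UNIV j] sum.If_cases)
  qed
  finally show ?thesis .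
qed


lemma outside_range:
  assumes G: "is_MAC_grid \<Omega> G" and y: "y$j > gx G j (gN G j) \<or> y$j < gx G j 0"
  shows "y \<notin> \<Omega>"
proof
  assume "y \<in> \<Omega>"
  then have "y \<in> closure \<Omega>" using closure_subset by blast
  then obtain c' where c': "c' \<in> mesh \<Omega> G" "y \<in> cellcbox G c'"
    using G unfolding is_MAC_grid_def by auto
  have ok: "c' j < gN G j" using c' unfolding mesh_def cell_ok_def by auto
  have "gx G j (Suc (c' j)) \<le> gx G j (gN G j)" using gx_mono[OF G, of "Suc (c' j)" "gN G j" j] ok by simp
  moreover have "gx G j 0 \<le> gx G j (c' j)" using gx_mono[OF G, of 0 "c' j" j] ok by simp
  moreover have "gx G j (c' j) \<le> y$j" "y$j \<le> gx G j (Suc (c' j))" using c'(2) unfolding cellcbox_def by auto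
  ultimately show False using y by linarith
qed

lemma nonmesh_disj:
  assumes G: "is_MAC_grid \<Omega> G" and op: "open \<Omega>" and N: "cell_ok G N" "N \<notin> mesh \<Omega> G"
  shows "cellbox G N \<inter> \<Omega> = {}"
proof (rule ccontr)
  assume ne: "cellbox G N \<inter> \<Omega> \<noteq> {}"
  have "open (cellbox G N \<inter> \<Omega>)" using op by (simp add: cellbox_box open_Int open_box)
  then have "\<not> negligible (cellbox G N \<inter> \<Omega>)" using open_not_negligible ne by blast
  then have "\<not> (cellbox G N \<inter> \<Omega> \<subseteq> hyp G)" using negligible_hyp negligible_subset by blast
  then obtain z where z: "z \<in> cellbox G N" "z \<in> \<Omega>" "z \<notin> hyp G" by blast
  obtain c' s' where cs: "c' \<in> mesh \<Omega> G" "z \<in> piece G c' s'" using in_some_piece[OF G z(2,3)] .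
  have "z \<in> cellbox G c'" using piece_sub[OF G mesh_cell_ok[OF cs(1)]] cs(2) by blast
  then have "N = c'" using cellbox_disj[OF G N(1) mesh_cell_ok[OF cs(1)] z(1)] by simp
  then show False using N cs by simp
qed

lemma dist_single:
  fixes x y :: "real^3"
  assumes "\<And>l. l \<noteq> j \<Longrightarrow> y$l = x$l"
  shows "dist x y \<le> \<bar>x$j - y$j\<bar>"
proof -
  have "dist x y \<le> (\<Sum>l\<in>UNIV. \<bar>(x - y)$l\<bar>)" unfolding dist_norm by (rule norm_le_l1_cart)
  also have "\<dots> = (\<Sum>l\<in>UNIV. if l = j then \<bar>x$j - y$j\<bar> else 0)"
    by (rule sum.cong) (use assms in auto)
  finally show ?thesis by simp
qed

lemma bdry_up:
  assumes G: "is_MAC_grid \<Omega> G" and op: "open \<Omega>" and c: "c \<in> mesh \<Omega> G"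
    and x: "x \<in> cellbox G c" and nm: "c(j := Suc (c j)) \<notin> mesh \<Omega> G"
  shows "infdist x (- \<Omega>) \<le> hM \<Omega> G"
proof -
  define a where "a = gx G j (c j)"
  define t where "t = gx G j (Suc (c j))"
  have xj: "a < x$j" "x$j < t" using x unfolding cellbox_def a_def t_def by auto
  have ok: "c j < gN G j" using c unfolding mesh_def cell_ok_def by auto
  have wt: "t - a \<le> hM \<Omega> G" using wid_le_hM[OF G c, of j] unfolding wid_def a_def t_def .
  obtain y where y: "y \<notin> \<Omega>" "\<And>l. l \<noteq> j \<Longrightarrow> y$l = x$l" "t < y$j" "y$j \<le> t + (x$j - a)"
  proof (cases "Suc (c j) < gN G j")
    case True
    define t2 where "t2 = gx G j (Suc (Suc (c j)))"
    have tt2: "t < t2" unfolding t_def t2_def using gx_smono[OF G, of "Suc (c j)" "Suc (Suc (c j))" j] True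
      by (simp add: Suc_leI)
    define r where "r = min (x$j - a) ((t2 - t) / 2)"
    have r: "0 < r" "r \<le> x$j - a" "t + r < t2" using xj tt2 unfolding r_def by (auto simp: min_def field_simps)
    define y where "y = (\<chi> l. if l = j then t + r else x$l)"
    have okN: "cell_ok G (c(j := Suc (c j)))" using c True unfolding mesh_def cell_ok_def by auto
    have "y \<in> cellbox G (c(j := Suc (c j)))"
      using x r unfolding cellbox_def y_def t_def t2_def by auto
    then have "y \<notin> \<Omega>" using nonmesh_disj[OF G op okN nm] by blast
    then show ?thesis using that[of y] r unfolding y_def by auto
  next
    case False
    then have eq: "Suc (c j) = gN G j" using ok by simp
    define y where "y = (\<chi> l. if l = j then t + (x$j - a) else x$l)"
    have "y$j > gx G j (gN G j)" using xj eq unfolding y_def t_def by simp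
    then have "y \<notin> \<Omega>" using outside_range[OF G] by blast
    then show ?thesis using that[of y] xj unfolding y_def by auto
  qed
  have "infdist x (- \<Omega>) \<le> dist x y" using y(1) by (intro infdist_le) simp
  also have "\<dots> \<le> \<bar>x$j - y$j\<bar>" using dist_single[of j y x] y(2) by simp
  also have "\<dots> \<le> hM \<Omega> G" using y(3,4) xj wt by simp
  finally show ?thesis .
qed

lemma bdry_dn:
  assumes G: "is_MAC_grid \<Omega> G" and op: "open \<Omega>" and c: "c \<in> mesh \<Omega> G"
    and x: "x \<in> cellbox G c" and nm: "c j = 0 \<or> c(j := c j - 1) \<notin> mesh \<Omega> G"
  shows "infdist x (- \<Omega>) \<le> hM \<Omega> G"
proof -
  define a where "a = gx G j (c j)"
  define t where "t = gx G j (Suc (c j))"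
  have xj: "a < x$j" "x$j < t" using x unfolding cellbox_def a_def t_def by auto
  have ok: "c j < gN G j" using c unfolding mesh_def cell_ok_def by auto
  have wt: "t - a \<le> hM \<Omega> G" using wid_le_hM[OF G c, of j] unfolding wid_def a_def t_def .
  obtain y where y: "y \<notin> \<Omega>" "\<And>l. l \<noteq> j \<Longrightarrow> y$l = x$l" "y$j < a" "a - (t - x$j) \<le> y$j"
  proof (cases "c j = 0")
    case False
    then have nm': "c(j := c j - 1) \<notin> mesh \<Omega> G" using nm by simp
    define t0 where "t0 = gx G j (c j - 1)"
    have tt0: "t0 < a" unfolding a_def t0_def using gx_smono[OF G, of "c j - 1" "c j" j] False ok
      by simp
    define r where "r = min (t - x$j) ((a - t0) / 2)"
    have r: "0 < r" "r \<le> t - x$j" "t0 < a - r" using xj tt0 unfolding r_def by (auto simp: min_def field_simps)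
    define y where "y = (\<chi> l. if l = j then a - r else x$l)"
    have okN: "cell_ok G (c(j := c j - 1))" using c False ok unfolding mesh_def cell_ok_def
      by (auto simp: less_imp_diff_less)
    have "y \<in> cellbox G (c(j := c j - 1))"
      using x r False unfolding cellbox_def y_def a_def t0_def by auto
    then have "y \<notin> \<Omega>" using nonmesh_disj[OF G op okN nm'] by blast
    then show ?thesis using that[of y] r unfolding y_def by auto
  next
    case True
    define y where "y = (\<chi> l. if l = j then a - (t - x$j) else x$l)"
    have "y$j < gx G j 0" using xj True unfolding y_def a_def by simp
    then have "y \<notin> \<Omega>" using outside_range[OF G] by blast
    then show ?thesis using that[of y] xj unfolding y_def by auto
  qed
  have "infdist x (- \<Omega>) \<le> dist x y" using y(1) by (intro infdist_le) simp
  also have "\<dots> \<le> \<bar>x$j - y$j\<bar>" using dist_single[of j y x] y(2) by simp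
  also have "\<dots> \<le> hM \<Omega> G" using y(3,4) xj wt by simp
  finally show ?thesis .
qed


lemma open_lebesgue: "open (S::(real^3) set) \<Longrightarrow> S \<in> sets lebesgue" by simp

lemma dual_open: "open (dual \<Omega> G i f)"
proof -
  have o1: "open {x::real^3. m < x$i}" for m by (intro open_Collect_less continuous_intros)
  have o2: "open {x::real^3. x$i < m}" for m by (intro open_Collect_less continuous_intros)
  have e1: "{x \<in> cellbox G c. m < x$i} = cellbox G c \<inter> {x. m < x$i}" for c m by auto
  have e2: "{x \<in> cellbox G c. x$i < m} = cellbox G c \<inter> {x. x$i < m}" for c m by auto
  show ?thesis unfolding dual_def e1 e2
    by (auto intro!: open_Un open_Int o1 o2 simp: cellbox_box open_box)
qed

lemma disc_meas: "disc_fun \<Omega> G i u \<in> borel_measurable lebesgue"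
  unfolding disc_fun_def
  by (intro borel_measurable_sum borel_measurable_times borel_measurable_const borel_measurable_indicator
      open_lebesgue dual_open)

lemma REE_meas: "R_EE \<Omega> G i j u \<in> borel_measurable lebesgue"
  unfolding R_EE_def
  by (intro borel_measurable_sum borel_measurable_times borel_measurable_const borel_measurable_indicator
      open_lebesgue dual_open)

lemma RM_meas: "R_M \<Omega> G i u \<in> borel_measurable lebesgue"
  unfolding R_M_def
  by (intro borel_measurable_sum borel_measurable_times borel_measurable_const borel_measurable_indicator
      open_lebesgue) (simp add: cellbox_box open_box)

lemma diffpow_meas:
  assumes "f \<in> borel_measurable M" "g \<in> borel_measurable M"
  shows "(\<lambda>x. ennreal (\<bar>f x - g x\<bar> powr q)) \<in> borel_measurable M"
  using assms by measurable

lemma sum_inj_le: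
  fixes f :: "'b \<Rightarrow> ennreal"
  assumes "finite B" "inj_on T A" "T ` A \<subseteq> B"
  shows "(\<Sum>a\<in>A. f (T a)) \<le> (\<Sum>b\<in>B. f b)"
proof -
  have "(\<Sum>a\<in>A. f (T a)) = (\<Sum>b\<in>T ` A. f b)" using sum.reindex[OF assms(2), of f] by simp
  also have "\<dots> \<le> (\<Sum>b\<in>B. f b)" by (rule sum_mono2[OF assms(1,3)]) simp
  finally show ?thesis .
qed

lemma sum_pieces:
  assumes G: "is_MAC_grid \<Omega> G" and Om: "\<Omega> \<in> sets lebesgue"
  shows "(\<Sum>p\<in>pidx \<Omega> G. emeasure lebesgue (piece G (fst p) (snd p))) = emeasure lebesgue \<Omega>"
proof -
  have "(\<integral>\<^sup>+x\<in>\<Omega>. 1 \<partial>lebesgue) = (\<Sum>p\<in>pidx \<Omega> G. \<integral>\<^sup>+x\<in>piece G (fst p) (snd p). 1 \<partial>lebesgue)"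
    by (rule decomp[OF G]) simp
  then show ?thesis using Om by (simp add: piece_def)
qed

definition flipi :: "3 \<Rightarrow> bool \<Rightarrow> (3 \<Rightarrow> bool) \<Rightarrow> (3 \<Rightarrow> bool)" where
  "flipi i b s = (if b then s(i := \<not> s i) else s)"

lemma flipi_inj: "flipi i b s = flipi i b s' \<Longrightarrow> s = s'"
  unfolding flipi_def by (cases b) (auto simp: fun_eq_iff split: if_splits)

lemma fsel_flipi_sum:
  "(\<Sum>b\<in>UNIV. u (fsel c (flipi i b s) i)) = u c + u (c(i := Suc (c i)))"
  by (cases "s i") (auto simp: UNIV_bool flipi_def fsel_def add.commute)

lemma cellbox_sub_c: "cellbox G c \<subseteq> cellcbox G c"
  unfolding cellbox_def cellcbox_def by (auto simp: less_imp_le)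

lemma piece_cc: "is_MAC_grid \<Omega> G \<Longrightarrow> c \<in> mesh \<Omega> G \<Longrightarrow> x \<in> piece G c s \<Longrightarrow> x \<in> cellcbox G c"
  using piece_sub mesh_cell_ok cellbox_sub_c by blast

lemma half_sum: "(\<Sum>b\<in>(UNIV::bool set). ennreal (1/2) * X) = X"
proof -
  have "ennreal 2 * ennreal (1/2) = 1" by (subst ennreal_mult[symmetric]) auto
  then show ?thesis by (simp add: mult.assoc[symmetric])
qed

lemma sum_rearr:
  fixes C h :: ennreal
  shows "(\<Sum>p\<in>A. C * (a p + (\<Sum>b\<in>B. h * g b p))) = C * ((\<Sum>p\<in>A. a p) + (\<Sum>b\<in>B. h * (\<Sum>p\<in>A. g b p)))"
proof -
  have "(\<Sum>p\<in>A. C * (a p + (\<Sum>b\<in>B. h * g b p))) = C * (\<Sum>p\<in>A. a p + (\<Sum>b\<in>B. h * g b p))"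
    by (simp add: sum_distrib_left)
  also have "\<dots> = C * ((\<Sum>p\<in>A. a p) + (\<Sum>p\<in>A. \<Sum>b\<in>B. h * g b p))" by (simp add: sum.distrib)
  also have "(\<Sum>p\<in>A. \<Sum>b\<in>B. h * g b p) = (\<Sum>b\<in>B. h * (\<Sum>p\<in>A. g b p))"
    by (simp add: sum.swap[of _ A] sum_distrib_left)
  finally show ?thesis .
qed

lemma key_RM:
  fixes \<phi> :: "real^3 \<Rightarrow> real"
  assumes G: "is_MAC_grid \<Omega> G" and Om: "\<Omega> \<in> sets lebesgue" and q: "q \<ge> 1" and \<epsilon>: "\<epsilon> \<ge> 0"
    and mphi: "\<phi> \<in> borel_measurable lebesgue"
    and close: "\<And>x y. x \<in> \<Omega> \<Longrightarrow> y \<in> \<Omega> \<Longrightarrow> dist x y \<le> 4 * hM \<Omega> G \<Longrightarrow> \<bar>\<phi> x - \<phi> y\<bar> \<le> \<epsilon>"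
  shows "(\<integral>\<^sup>+x\<in>\<Omega>. ennreal (\<bar>R_M \<Omega> G i u x - \<phi> x\<bar> powr q) \<partial>lebesgue) \<le>
     ennreal (2 powr (q - 1)) * (emeasure lebesgue \<Omega> * ennreal (\<epsilon> powr q) +
        (\<integral>\<^sup>+x\<in>\<Omega>. ennreal (\<bar>disc_fun \<Omega> G i u x - \<phi> x\<bar> powr q) \<partial>lebesgue))"
proof -
  let ?w = "disc_fun \<Omega> G i u"
  let ?R = "R_M \<Omega> G i u"
  define C where "C = ennreal (2 powr (q - 1))"
  define I where "I p = (\<integral>\<^sup>+y\<in>piece G (fst p) (snd p). ennreal (\<bar>?w y - \<phi> y\<bar> powr q) \<partial>lebesgue)" for p
  define P where "P p = volc G (fst p) / 8" for p :: "(3 \<Rightarrow> nat) \<times> (3 \<Rightarrow> bool)"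
  have Ppos: "P p > 0" if "p \<in> pidx \<Omega> G" for p
    using that volc_pos[OF G] mesh_cell_ok unfolding P_def pidx_def by auto
  have Pm: "emeasure lebesgue (piece G (fst p) (snd p)) = ennreal (P p)" if "p \<in> pidx \<Omega> G" for p
    using that emeasure_piece[OF G] mesh_cell_ok unfolding P_def pidx_def by auto
  define T where "T b p = (fst p, flipi i b (snd p))" for b and p :: "(3 \<Rightarrow> nat) \<times> (3 \<Rightarrow> bool)"
  have step: "(\<integral>\<^sup>+x\<in>piece G (fst p) (snd p). ennreal (\<bar>?R x - \<phi> x\<bar> powr q) \<partial>lebesgue)
      \<le> C * (ennreal (P p * \<epsilon> powr q) + (\<Sum>b\<in>UNIV. ennreal (1/2) * I (T b p)))"
    if p: "p \<in> pidx \<Omega> G" for p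
  proof -
    obtain c s where ps: "p = (c, s)" by (cases p)
    have c: "c \<in> mesh \<Omega> G" using p ps unfolding pidx_def by auto
    have "(\<integral>\<^sup>+x\<in>piece G c s. ennreal (\<bar>?R x - \<phi> x\<bar> powr q) \<partial>lebesgue) \<le>
      ennreal (2 powr (q - 1)) * (ennreal (P p * \<epsilon> powr q) +
        (\<Sum>b\<in>UNIV. ennreal (P p / (card (UNIV::bool set) * P p)) *
          (\<integral>\<^sup>+y\<in>piece G c (flipi i b s). ennreal (\<bar>?w y - \<phi> y\<bar> powr q) \<partial>lebesgue)))"
    proof (rule piece_bound[OF q \<epsilon>, where cv = "\<lambda>b. u (fsel c (flipi i b s) i)"])
      show "piece G c s \<in> sets lebesgue" by (simp add: piece_def)
      show "emeasure lebesgue (piece G c s) = ennreal (P p)" using Pm[OF p] ps by simp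
      show "0 \<le> P p" using Ppos[OF p] by simp
      show "finite (UNIV::bool set)" "(UNIV::bool set) \<noteq> {}" by auto
      fix b :: bool
      show "piece G c (flipi i b s) \<in> sets lebesgue" by (simp add: piece_def)
      show "emeasure lebesgue (piece G c (flipi i b s)) = ennreal (P p)"
        using emeasure_piece[OF G mesh_cell_ok[OF c]] ps unfolding P_def by simp
      show "P p > 0" using Ppos[OF p] .
    next
      fix b y assume "y \<in> piece G c (flipi i b s)"
      then show "?w y = u (fsel c (flipi i b s) i)" by (rule disc_val[OF G c])
    next
      fix x assume "x \<in> piece G c s"
      then show "?R x = (\<Sum>b\<in>UNIV. u (fsel c (flipi i b s) i)) / card (UNIV :: bool set)"
        using RM_val[OF G c] fsel_flipi_sum[of u c i s] by simp
    next
      fix b x y assume x: "x \<in> piece G c s" and y: "y \<in> piece G c (flipi i b s)"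
      have xc: "x \<in> cellcbox G c" "y \<in> cellcbox G c"
        using piece_cc[OF G c x] piece_cc[OF G c y] .
      have "dist x y \<le> 4 * hM \<Omega> G"
        by (rule dist_nb[OF G c c xc, of 0]) auto
      moreover have "x \<in> \<Omega>" "y \<in> \<Omega>" using x y piece_sub_Omega[OF G c] by auto
      ultimately show "\<bar>\<phi> x - \<phi> y\<bar> \<le> \<epsilon>" using close by blast
    qed (use mphi disc_meas in auto)
    moreover have "ennreal (P p / (card (UNIV::bool set) * P p)) = ennreal (1/2)"
      using Ppos[OF p] by simp
    ultimately show ?thesis unfolding C_def I_def T_def using ps by simp
  qed
  have TI: "(\<Sum>p\<in>pidx \<Omega> G. I (T b p)) \<le> (\<Sum>p\<in>pidx \<Omega> G. I p)" for b
  proof (rule sum_inj_le[OF finite_pidx, where T="T b" and f=I])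
    show "inj_on (T b) (pidx \<Omega> G)"
      by (rule inj_onI) (auto simp: T_def prod_eq_iff dest: flipi_inj)
    show "T b ` pidx \<Omega> G \<subseteq> pidx \<Omega> G" by (auto simp: T_def pidx_def)
  qed
  have "(\<integral>\<^sup>+x\<in>\<Omega>. ennreal (\<bar>?R x - \<phi> x\<bar> powr q) \<partial>lebesgue) =
      (\<Sum>p\<in>pidx \<Omega> G. \<integral>\<^sup>+x\<in>piece G (fst p) (snd p). ennreal (\<bar>?R x - \<phi> x\<bar> powr q) \<partial>lebesgue)"
    by (rule decomp[OF G]) (intro diffpow_meas RM_meas mphi)
  also have "\<dots> \<le> (\<Sum>p\<in>pidx \<Omega> G. C * (ennreal (P p * \<epsilon> powr q) + (\<Sum>b\<in>UNIV. ennreal (1/2) * I (T b p))))"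
    by (rule sum_mono) (rule step)
  also have "\<dots> = C * ((\<Sum>p\<in>pidx \<Omega> G. ennreal (P p) * ennreal (\<epsilon> powr q)) +
        (\<Sum>b\<in>UNIV. ennreal (1/2) * (\<Sum>p\<in>pidx \<Omega> G. I (T b p))))"
  proof -
    have "ennreal (P p * \<epsilon> powr q) = ennreal (P p) * ennreal (\<epsilon> powr q)" if "p \<in> pidx \<Omega> G" for p
      using Ppos[OF that] by (simp add: ennreal_mult)
    then have "(\<Sum>p\<in>pidx \<Omega> G. ennreal (P p * \<epsilon> powr q)) = (\<Sum>p\<in>pidx \<Omega> G. ennreal (P p) * ennreal (\<epsilon> powr q))"
      by (rule sum.cong[OF refl])
    then show ?thesis by (simp only: sum_rearr)
  qed
  also have "(\<Sum>p\<in>pidx \<Omega> G. ennreal (P p) * ennreal (\<epsilon> powr q)) = emeasure lebesgue \<Omega> * ennreal (\<epsilon> powr q)"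
    using sum_pieces[OF G Om] Pm by (simp add: sum_distrib_right[symmetric] cong: sum.cong)
  also have "(\<Sum>b\<in>UNIV. ennreal (1/2) * (\<Sum>p\<in>pidx \<Omega> G. I (T b p))) \<le>
       (\<Sum>b\<in>(UNIV::bool set). ennreal (1/2) * (\<Sum>p\<in>pidx \<Omega> G. I p))"
    by (intro sum_mono mult_left_mono TI) simp
  also have "(\<Sum>b\<in>(UNIV::bool set). ennreal (1/2) * (\<Sum>p\<in>pidx \<Omega> G. I p)) = (\<Sum>p\<in>pidx \<Omega> G. I p)"
    by (rule half_sum)
  also have "(\<Sum>p\<in>pidx \<Omega> G. I p) = (\<integral>\<^sup>+x\<in>\<Omega>. ennreal (\<bar>?w x - \<phi> x\<bar> powr q) \<partial>lebesgue)"
    unfolding I_def by (rule decomp[OF G, symmetric]) (intro diffpow_meas disc_meas mphi)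
  finally show ?thesis unfolding C_def by (simp add: mult_left_mono add_left_mono)
qed


definition nbc :: "3 \<Rightarrow> (3 \<Rightarrow> nat) \<Rightarrow> (3 \<Rightarrow> bool) \<Rightarrow> (3 \<Rightarrow> nat)" where
  "nbc j c s = (if s j then c(j := Suc (c j)) else c(j := c j - 1))"

lemma sum_bb:
  fixes g :: "bool \<Rightarrow> bool \<Rightarrow> real"
  shows "(\<Sum>k\<in>(UNIV :: (bool \<times> bool) set). g (fst k) (snd k)) = (\<Sum>a\<in>UNIV. \<Sum>b\<in>UNIV. g a b)"
  by (simp add: UNIV_Times_UNIV[symmetric] sum.cartesian_product case_prod_beta del: UNIV_Times_UNIV)

lemma card_bb: "card (UNIV :: (bool \<times> bool) set) = 4"
  by (simp add: card_UNIV_bool)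

lemma REE_sum:
  assumes ij: "i \<noteq> j"
  shows "R_EE_val i j u (fsel c s j) =
     ((u c + u (c(i := Suc (c i)))) + (u (nbc j c s) + u ((nbc j c s)(i := Suc (nbc j c s i))))) / 4"
proof (cases "s j")
  case True
  have K: "(c(j := Suc (c j)))(j := Suc (c j) - 1) = c" by (auto simp: fun_eq_iff)
  have "R_EE_val i j u (fsel c s j) = (u c + u (c(i := Suc (c i))) + u (c(j := Suc (c j))) +
      u ((c(j := Suc (c j)))(i := Suc ((c(j := Suc (c j))) i)))) / 4"
    using True ij unfolding R_EE_val_def fsel_def Let_def K by simp
  then show ?thesis using True unfolding nbc_def by (simp add: add.assoc)
next
  case False
  have "R_EE_val i j u (fsel c s j) = (u (c(j := c j - 1)) + u ((c(j := c j - 1))(i := Suc ((c(j := c j - 1)) i))) + u c + u (c(i := Suc (c i)))) / 4"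
    using False ij unfolding R_EE_val_def fsel_def Let_def by simp
  then show ?thesis using False unfolding nbc_def by (simp add: algebra_simps)
qed


lemma int_char:
  assumes c: "c \<in> mesh \<Omega> G"
  shows "fsel c s j \<in> int_faces \<Omega> G j \<longleftrightarrow>
     (if s j then c(j := Suc (c j)) \<in> mesh \<Omega> G else 0 < c j \<and> c(j := c j - 1) \<in> mesh \<Omega> G)"
proof (cases "s j")
  case True
  have "(c(j := Suc (c j)))(j := Suc (c j) - 1) = c" by (auto simp: fun_eq_iff)
  then show ?thesis using True c unfolding fsel_def int_faces_def has_low_def has_up_def by auto
next
  case False
  then show ?thesis using c unfolding fsel_def int_faces_def has_low_def has_up_def by auto
qed

lemma volc_ratio:
  assumes "\<And>k. k \<noteq> j \<Longrightarrow> c' k = c k"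
  shows "volc G c * wid G c' j = volc G c' * wid G c j"
proof -
  have e: "(\<Prod>k\<in>UNIV - {j}. wid G c k) = (\<Prod>k\<in>UNIV - {j}. wid G c' k)"
    by (rule prod.cong) (auto simp: wid_def assms)
  have "volc G c = wid G c j * (\<Prod>k\<in>UNIV - {j}. wid G c k)"
    unfolding volc_def by (simp add: prod.remove[of UNIV j])
  moreover have "volc G c' = wid G c' j * (\<Prod>k\<in>UNIV - {j}. wid G c' k)"
    unfolding volc_def by (simp add: prod.remove[of UNIV j])
  ultimately show ?thesis using e by simp
qed

definition cellk :: "bool \<Rightarrow> 3 \<Rightarrow> (3 \<Rightarrow> nat) \<Rightarrow> (3 \<Rightarrow> bool) \<Rightarrow> (3 \<Rightarrow> nat)" where
  "cellk a j c s = (if a then nbc j c s else c)"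

definition Sint :: "(real^3) set \<Rightarrow> grid \<Rightarrow> 3 \<Rightarrow> ((3 \<Rightarrow> nat) \<times> (3 \<Rightarrow> bool)) set" where
  "Sint \<Omega> G j = {p \<in> pidx \<Omega> G. fsel (fst p) (snd p) j \<in> int_faces \<Omega> G j}"

definition Tk :: "3 \<Rightarrow> 3 \<Rightarrow> bool \<times> bool \<Rightarrow> (3 \<Rightarrow> nat) \<times> (3 \<Rightarrow> bool) \<Rightarrow> (3 \<Rightarrow> nat) \<times> (3 \<Rightarrow> bool)" where
  "Tk i j k p = (cellk (fst k) j (fst p) (snd p), flipi i (snd k) (snd p))"

lemma Sint_D:
  assumes "(c, s) \<in> Sint \<Omega> G j"
  shows "c \<in> mesh \<Omega> G" "nbc j c s \<in> mesh \<Omega> G" "s j \<or> 0 < c j"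
proof -
  show c: "c \<in> mesh \<Omega> G" using assms unfolding Sint_def pidx_def by auto
  have "fsel c s j \<in> int_faces \<Omega> G j" using assms unfolding Sint_def by auto
  then have "(if s j then c(j := Suc (c j)) \<in> mesh \<Omega> G else 0 < c j \<and> c(j := c j - 1) \<in> mesh \<Omega> G)"
    using int_char[OF c] by blast
  then show "nbc j c s \<in> mesh \<Omega> G" "s j \<or> 0 < c j" unfolding nbc_def by (auto split: if_splits)
qed

lemma cellk_mesh: "(c, s) \<in> Sint \<Omega> G j \<Longrightarrow> cellk a j c s \<in> mesh \<Omega> G"
  using Sint_D unfolding cellk_def by auto

lemma nbc_inj:
  assumes "nbc j c s = nbc j c' s" "s j \<or> 0 < c j" "s j \<or> 0 < c' j"
  shows "c = c'"
proof (rule ext)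
  fix k
  have "nbc j c s k = nbc j c' s k" using assms(1) by simp
  then show "c k = c' k" using assms(2,3) unfolding nbc_def by (cases "k = j"; cases "s j") auto
qed

lemma Tk_inj: "inj_on (Tk i j k) (Sint \<Omega> G j)"
proof (rule inj_onI)
  fix p p' assume p: "p \<in> Sint \<Omega> G j" and p': "p' \<in> Sint \<Omega> G j" and e: "Tk i j k p = Tk i j k p'"
  obtain c s where ps: "p = (c, s)" by (cases p)
  obtain c' s' where ps': "p' = (c', s')" by (cases p')
  have ss: "s = s'" using e ps ps' unfolding Tk_def by (auto dest: flipi_inj)
  have ec: "cellk (fst k) j c s = cellk (fst k) j c' s" using e ps ps' ss unfolding Tk_def by simp
  have "c = c'"
  proof (cases "fst k")
    case False then show ?thesis using ec unfolding cellk_def by simp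
  next
    case True
    then have "nbc j c s = nbc j c' s" using ec unfolding cellk_def by simp
    then show ?thesis by (rule nbc_inj) (use Sint_D(3)[of c s] Sint_D(3)[of c' s'] p p' ps ps' ss in auto)
  qed
  then show "p = p'" using ps ps' ss by simp
qed

lemma Tk_into: "Tk i j k ` Sint \<Omega> G j \<subseteq> pidx \<Omega> G"
  using cellk_mesh unfolding Tk_def pidx_def by fastforce


lemma coef_bound:
  assumes G: "is_MAC_grid \<Omega> G" and ne: "\<Omega> \<noteq> {}" and eta: "\<eta> > 0" "etaM \<Omega> G \<ge> \<eta>"
    and p: "(c, s) \<in> Sint \<Omega> G j"
  shows "volc G c / (4 * volc G (cellk a j c s)) \<le> (1 + 1 / \<eta>) / 4"
proof (cases a)
  case False
  have "volc G c > 0" using volc_pos[OF G mesh_cell_ok[OF Sint_D(1)[OF p]]] .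
  then show ?thesis using False eta(1) unfolding cellk_def by simp
next
  case True
  have c: "c \<in> mesh \<Omega> G" and nbm: "nbc j c s \<in> mesh \<Omega> G" using Sint_D[OF p] by auto
  have nbsame: "\<And>k. k \<noteq> j \<Longrightarrow> nbc j c s k = c k" unfolding nbc_def by auto
  have r: "volc G c * wid G (nbc j c s) j = volc G (nbc j c s) * wid G c j"
    by (rule volc_ratio) (rule nbsame)
  have w1: "wid G c j \<le> hM \<Omega> G" by (rule wid_le_hM[OF G c])
  have w2: "wid G (nbc j c s) j \<ge> \<eta> * hM \<Omega> G" by (rule wid_ge_eta[OF G ne nbm eta(2)])
  have hpos: "hM \<Omega> G > 0" by (rule hM_pos[OF G ne])
  have vpos: "volc G (nbc j c s) > 0" "volc G c > 0"
    using volc_pos[OF G mesh_cell_ok[OF nbm]] volc_pos[OF G mesh_cell_ok[OF c]] by auto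
  have "volc G c * (\<eta> * hM \<Omega> G) \<le> volc G c * wid G (nbc j c s) j"
    using w2 vpos by (intro mult_left_mono) auto
  also have "\<dots> = volc G (nbc j c s) * wid G c j" by (rule r)
  also have "\<dots> \<le> volc G (nbc j c s) * hM \<Omega> G" using w1 vpos by (intro mult_left_mono) auto
  finally have "(volc G c * \<eta>) * hM \<Omega> G \<le> volc G (nbc j c s) * hM \<Omega> G" by (simp add: mult.assoc)
  then have "volc G c * \<eta> \<le> volc G (nbc j c s)" using hpos by simp
  then have "volc G c / volc G (nbc j c s) \<le> 1 / \<eta>"
    using vpos eta(1) by (simp add: field_simps)
  then have "volc G c / (4 * volc G (nbc j c s)) \<le> 1 / \<eta> / 4" by simp
  also have "\<dots> \<le> (1 + 1 / \<eta>) / 4" using eta(1) by simp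
  finally show ?thesis using True unfolding cellk_def by simp
qed

lemma bdry_zero:
  assumes G: "is_MAC_grid \<Omega> G" and op: "open \<Omega>" and c: "c \<in> mesh \<Omega> G"
    and nint: "fsel c s j \<notin> int_faces \<Omega> G j" and x: "x \<in> piece G c s"
  shows "infdist x (- \<Omega>) \<le> hM \<Omega> G"
proof -
  have xc: "x \<in> cellbox G c" using piece_sub[OF G mesh_cell_ok[OF c]] x by blast
  show ?thesis
  proof (cases "s j")
    case True
    then have "c(j := Suc (c j)) \<notin> mesh \<Omega> G" using nint int_char[OF c] by simp
    then show ?thesis by (rule bdry_up[OF G op c xc])
  next
    case False
    then have "c j = 0 \<or> c(j := c j - 1) \<notin> mesh \<Omega> G" using nint int_char[OF c] by simp
    then show ?thesis by (rule bdry_dn[OF G op c xc])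
  qed
qed

lemma fsel_cellk_sum:
  assumes ij: "i \<noteq> j"
  shows "(\<Sum>k\<in>UNIV. u (fsel (cellk (fst k) j c s) (flipi i (snd k) s) i)) / card (UNIV :: (bool \<times> bool) set)
     = R_EE_val i j u (fsel c s j)"
proof -
  have "(\<Sum>k\<in>UNIV. u (fsel (cellk (fst k) j c s) (flipi i (snd k) s) i)) =
      (\<Sum>a\<in>UNIV. \<Sum>b\<in>UNIV. u (fsel (cellk a j c s) (flipi i b s) i))"
    by (rule sum_bb)
  also have "\<dots> = (\<Sum>a\<in>UNIV. u (cellk a j c s) + u ((cellk a j c s)(i := Suc (cellk a j c s i))))"
    by (simp only: fsel_flipi_sum)
  also have "\<dots> = (u c + u (c(i := Suc (c i)))) + (u (nbc j c s) + u ((nbc j c s)(i := Suc (nbc j c s i))))"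
    by (simp add: UNIV_bool cellk_def add.commute)
  finally show ?thesis using REE_sum[OF ij, of u c s] card_bb by simp
qed


lemma key_REE:
  fixes \<phi> :: "real^3 \<Rightarrow> real"
  assumes G: "is_MAC_grid \<Omega> G" and op: "open \<Omega>" and ne: "\<Omega> \<noteq> {}"
    and q: "q \<ge> 1" and \<epsilon>: "\<epsilon> \<ge> 0" and ij: "i \<noteq> j"
    and eta: "\<eta> > 0" "etaM \<Omega> G \<ge> \<eta>"
    and mphi: "\<phi> \<in> borel_measurable lebesgue"
    and close: "\<And>x y. x \<in> \<Omega> \<Longrightarrow> y \<in> \<Omega> \<Longrightarrow> dist x y \<le> 4 * hM \<Omega> G \<Longrightarrow> \<bar>\<phi> x - \<phi> y\<bar> \<le> \<epsilon>"
    and vanish: "\<And>x. infdist x (- \<Omega>) \<le> hM \<Omega> G \<Longrightarrow> \<phi> x = 0"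
  shows "(\<integral>\<^sup>+x\<in>\<Omega>. ennreal (\<bar>R_EE \<Omega> G i j u x - \<phi> x\<bar> powr q) \<partial>lebesgue) \<le>
     ennreal (2 powr (q - 1)) * (emeasure lebesgue \<Omega> * ennreal (\<epsilon> powr q) +
        ennreal (1 + 1 / \<eta>) * (\<integral>\<^sup>+x\<in>\<Omega>. ennreal (\<bar>disc_fun \<Omega> G i u x - \<phi> x\<bar> powr q) \<partial>lebesgue))"
proof -
  have Om: "\<Omega> \<in> sets lebesgue" using op by simp
  let ?w = "disc_fun \<Omega> G i u"
  let ?R = "R_EE \<Omega> G i j u"
  define C where "C = ennreal (2 powr (q - 1))"
  define D0 where "D0 = (1 + 1 / \<eta>) / 4"
  define I where "I p = (\<integral>\<^sup>+y\<in>piece G (fst p) (snd p). ennreal (\<bar>?w y - \<phi> y\<bar> powr q) \<partial>lebesgue)" for p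
  define P where "P p = volc G (fst p) / 8" for p :: "(3 \<Rightarrow> nat) \<times> (3 \<Rightarrow> bool)"
  have Ppos: "P p > 0" if "p \<in> pidx \<Omega> G" for p
    using that volc_pos[OF G] mesh_cell_ok unfolding P_def pidx_def by auto
  have Pm: "emeasure lebesgue (piece G (fst p) (snd p)) = ennreal (P p)" if "p \<in> pidx \<Omega> G" for p
    using that emeasure_piece[OF G] mesh_cell_ok unfolding P_def pidx_def by auto
  have TI: "(\<Sum>p\<in>Sint \<Omega> G j. I (Tk i j k p)) \<le> (\<Sum>p\<in>pidx \<Omega> G. I p)" for k
    by (rule sum_inj_le[OF finite_pidx Tk_inj Tk_into])
  define I' where "I' k p = (if p \<in> Sint \<Omega> G j then I (Tk i j k p) else 0)" for k p
  have step: "(\<integral>\<^sup>+x\<in>piece G (fst p) (snd p). ennreal (\<bar>?R x - \<phi> x\<bar> powr q) \<partial>lebesgue)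
      \<le> C * (ennreal (P p * \<epsilon> powr q) + (\<Sum>k\<in>UNIV. ennreal D0 * I' k p))"
    if p: "p \<in> pidx \<Omega> G" for p
  proof -
    obtain c s where ps: "p = (c, s)" by (cases p)
    have c: "c \<in> mesh \<Omega> G" using p ps unfolding pidx_def by auto
    show ?thesis
    proof (cases "p \<in> Sint \<Omega> G j")
      case False
      then have nint: "fsel c s j \<notin> int_faces \<Omega> G j" using p ps unfolding Sint_def by auto
      have "(\<integral>\<^sup>+x\<in>piece G (fst p) (snd p). ennreal (\<bar>?R x - \<phi> x\<bar> powr q) \<partial>lebesgue) = 0"
      proof -
        have z: "ennreal (\<bar>?R x - \<phi> x\<bar> powr q) * indicator (piece G (fst p) (snd p)) x = 0" for x
        proof (cases "x \<in> piece G c s")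
          case True
          have R0: "?R x = 0" using REE_val[OF G c True] nint by simp
          have "\<phi> x = 0" by (rule vanish, rule bdry_zero[OF G op c nint True])
          then show ?thesis using R0 q by simp
        qed (use ps in simp)
        show ?thesis by (simp only: z nn_integral_0_iff) simp
      qed
      then show ?thesis by simp
    next
      case True
      have cs: "(c, s) \<in> Sint \<Omega> G j" using True ps by simp
      have cm: "cellk a j c s \<in> mesh \<Omega> G" for a using cellk_mesh[OF cs] .
      have nbm: "nbc j c s \<in> mesh \<Omega> G" using Sint_D(2)[OF cs] .
      have nbsame: "\<And>k. k \<noteq> j \<Longrightarrow> nbc j c s k = c k" unfolding nbc_def by auto
      have nbj: "nbc j c s j = Suc (c j) \<or> Suc (nbc j c s j) = c j"
        using Sint_D(3)[OF cs] unfolding nbc_def by auto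
      define \<alpha> where "\<alpha> k = volc G (cellk (fst k) j c s) / 8" for k :: "bool \<times> bool"
      have \<alpha>pos: "\<alpha> k > 0" for k using volc_pos[OF G mesh_cell_ok[OF cm]] unfolding \<alpha>_def by simp
      have int: "fsel c s j \<in> int_faces \<Omega> G j" using cs unfolding Sint_def by simp
      have pb: "(\<integral>\<^sup>+x\<in>piece G c s. ennreal (\<bar>?R x - \<phi> x\<bar> powr q) \<partial>lebesgue) \<le>
        ennreal (2 powr (q - 1)) * (ennreal (P p * \<epsilon> powr q) +
          (\<Sum>k\<in>UNIV. ennreal (P p / (card (UNIV::(bool \<times> bool) set) * \<alpha> k)) *
            (\<integral>\<^sup>+y\<in>piece G (cellk (fst k) j c s) (flipi i (snd k) s). ennreal (\<bar>?w y - \<phi> y\<bar> powr q) \<partial>lebesgue)))"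
      proof (rule piece_bound[OF q \<epsilon>, where cv = "\<lambda>k. u (fsel (cellk (fst k) j c s) (flipi i (snd k) s) i)"])
        show "piece G c s \<in> sets lebesgue" by (simp add: piece_def)
        show "emeasure lebesgue (piece G c s) = ennreal (P p)" using Pm[OF p] ps by simp
        show "0 \<le> P p" using Ppos[OF p] by simp
        show "finite (UNIV::(bool \<times> bool) set)" "(UNIV::(bool \<times> bool) set) \<noteq> {}" by auto
        fix k :: "bool \<times> bool"
        show "piece G (cellk (fst k) j c s) (flipi i (snd k) s) \<in> sets lebesgue" by (simp add: piece_def)
        show "emeasure lebesgue (piece G (cellk (fst k) j c s) (flipi i (snd k) s)) = ennreal (\<alpha> k)"
          using emeasure_piece[OF G mesh_cell_ok[OF cm]] unfolding \<alpha>_def by simp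
        show "\<alpha> k > 0" by (rule \<alpha>pos)
      next
        fix k y assume "y \<in> piece G (cellk (fst k) j c s) (flipi i (snd k) s)"
        then show "?w y = u (fsel (cellk (fst k) j c s) (flipi i (snd k) s) i)" by (rule disc_val[OF G cm])
      next
        fix x assume x: "x \<in> piece G c s"
        show "?R x = (\<Sum>k\<in>UNIV. u (fsel (cellk (fst k) j c s) (flipi i (snd k) s) i)) / card (UNIV :: (bool \<times> bool) set)"
          using REE_val[OF G c x] int fsel_cellk_sum[OF ij, of u c s] by simp
      next
        fix k x y assume x: "x \<in> piece G c s" and y: "y \<in> piece G (cellk (fst k) j c s) (flipi i (snd k) s)"
        have xc: "x \<in> cellcbox G c" using piece_cc[OF G c x] .
        have yc: "y \<in> cellcbox G (cellk (fst k) j c s)" using piece_cc[OF G cm y] .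
        have "dist x y \<le> 4 * hM \<Omega> G"
        proof (cases "fst k")
          case True
          then have "cellk (fst k) j c s = nbc j c s" unfolding cellk_def by simp
          then have yc': "y \<in> cellcbox G (nbc j c s)" using yc by simp
          show ?thesis by (rule dist_nb[OF G c nbm xc yc' nbsame]) (use nbj in auto)
        next
          case False
          then have "cellk (fst k) j c s = c" unfolding cellk_def by simp
          then show ?thesis using dist_nb[OF G c c xc, of y j] yc by simp
        qed
        moreover have "x \<in> \<Omega>" "y \<in> \<Omega>" using x y piece_sub_Omega[OF G c] piece_sub_Omega[OF G cm] by blast+
        ultimately show "\<bar>\<phi> x - \<phi> y\<bar> \<le> \<epsilon>" using close by blast
      qed (use mphi disc_meas in auto)
      have coef: "ennreal (P p / (card (UNIV::(bool \<times> bool) set) * \<alpha> k)) \<le> ennreal D0" for k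
      proof (rule ennreal_leI)
        have "P p / (card (UNIV::(bool \<times> bool) set) * \<alpha> k) = volc G c / (4 * volc G (cellk (fst k) j c s))"
          unfolding P_def \<alpha>_def card_bb using ps by simp
        also have "\<dots> \<le> D0" unfolding D0_def by (rule coef_bound[OF G ne eta cs])
        finally show "P p / (card (UNIV::(bool \<times> bool) set) * \<alpha> k) \<le> D0" .
      qed
      have "(\<integral>\<^sup>+x\<in>piece G (fst p) (snd p). ennreal (\<bar>?R x - \<phi> x\<bar> powr q) \<partial>lebesgue) \<le>
        C * (ennreal (P p * \<epsilon> powr q) + (\<Sum>k\<in>UNIV. ennreal (P p / (card (UNIV::(bool \<times> bool) set) * \<alpha> k)) * I (Tk i j k p)))"
        using pb ps unfolding C_def I_def Tk_def by simp
      also have "\<dots> \<le> C * (ennreal (P p * \<epsilon> powr q) + (\<Sum>k\<in>UNIV. ennreal D0 * I (Tk i j k p)))"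
        by (intro mult_left_mono add_left_mono sum_mono mult_right_mono coef) auto
      also have "\<dots> = C * (ennreal (P p * \<epsilon> powr q) + (\<Sum>k\<in>UNIV. ennreal D0 * I' k p))"
        unfolding I'_def using True by simp
      finally show ?thesis .
    qed
  qed
  have "(\<integral>\<^sup>+x\<in>\<Omega>. ennreal (\<bar>?R x - \<phi> x\<bar> powr q) \<partial>lebesgue) =
      (\<Sum>p\<in>pidx \<Omega> G. \<integral>\<^sup>+x\<in>piece G (fst p) (snd p). ennreal (\<bar>?R x - \<phi> x\<bar> powr q) \<partial>lebesgue)"
    by (rule decomp[OF G]) (intro diffpow_meas REE_meas mphi)
  also have "\<dots> \<le> (\<Sum>p\<in>pidx \<Omega> G. C * (ennreal (P p * \<epsilon> powr q) + (\<Sum>k\<in>UNIV. ennreal D0 * I' k p)))"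
    by (rule sum_mono) (rule step)
  also have "\<dots> = C * ((\<Sum>p\<in>pidx \<Omega> G. ennreal (P p) * ennreal (\<epsilon> powr q)) +
        (\<Sum>k\<in>UNIV. ennreal D0 * (\<Sum>p\<in>pidx \<Omega> G. I' k p)))"
  proof -
    have "ennreal (P p * \<epsilon> powr q) = ennreal (P p) * ennreal (\<epsilon> powr q)" if "p \<in> pidx \<Omega> G" for p
      using Ppos[OF that] by (simp add: ennreal_mult)
    then have "(\<Sum>p\<in>pidx \<Omega> G. ennreal (P p * \<epsilon> powr q)) = (\<Sum>p\<in>pidx \<Omega> G. ennreal (P p) * ennreal (\<epsilon> powr q))"
      by (rule sum.cong[OF refl])
    then show ?thesis by (simp only: sum_rearr)
  qed
  also have "(\<Sum>p\<in>pidx \<Omega> G. ennreal (P p) * ennreal (\<epsilon> powr q)) = emeasure lebesgue \<Omega> * ennreal (\<epsilon> powr q)"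
    using sum_pieces[OF G Om] Pm by (simp add: sum_distrib_right[symmetric] cong: sum.cong)
  also have "(\<Sum>k\<in>UNIV. ennreal D0 * (\<Sum>p\<in>pidx \<Omega> G. I' k p)) \<le>
       (\<Sum>k\<in>(UNIV::(bool \<times> bool) set). ennreal D0 * (\<Sum>p\<in>pidx \<Omega> G. I p))"
  proof (rule sum_mono, rule mult_left_mono)
    fix k :: "bool \<times> bool"
    have "(\<Sum>p\<in>pidx \<Omega> G. I' k p) = (\<Sum>p\<in>Sint \<Omega> G j. I (Tk i j k p))"
    proof -
      have "Sint \<Omega> G j \<subseteq> pidx \<Omega> G" unfolding Sint_def by auto
      then show ?thesis unfolding I'_def using finite_pidx
        by (simp add: sum.If_cases Int_absorb1 Int_absorb2)
    qed
    then show "(\<Sum>p\<in>pidx \<Omega> G. I' k p) \<le> (\<Sum>p\<in>pidx \<Omega> G. I p)" using TI[of k] by simp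
  qed simp
  also have "(\<Sum>k\<in>(UNIV::(bool \<times> bool) set). ennreal D0 * (\<Sum>p\<in>pidx \<Omega> G. I p)) =
     ennreal (1 + 1 / \<eta>) * (\<Sum>p\<in>pidx \<Omega> G. I p)"
  proof -
    have D0p: "D0 \<ge> 0" using eta(1) unfolding D0_def by simp
    have "(\<Sum>k\<in>(UNIV::(bool \<times> bool) set). ennreal D0 * (\<Sum>p\<in>pidx \<Omega> G. I p)) =
        ennreal 4 * (ennreal D0 * (\<Sum>p\<in>pidx \<Omega> G. I p))" using card_bb by simp
    also have "\<dots> = ennreal (4 * D0) * (\<Sum>p\<in>pidx \<Omega> G. I p)"
      using D0p by (simp add: ennreal_mult mult.assoc)
    also have "4 * D0 = 1 + 1 / \<eta>" unfolding D0_def by simp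
    finally show ?thesis .
  qed
  also have "(\<Sum>p\<in>pidx \<Omega> G. I p) = (\<integral>\<^sup>+x\<in>\<Omega>. ennreal (\<bar>?w x - \<phi> x\<bar> powr q) \<partial>lebesgue)"
    unfolding I_def by (rule decomp[OF G, symmetric]) (intro diffpow_meas disc_meas mphi)
  finally show ?thesis unfolding C_def by (simp add: mult_left_mono add_left_mono)
qed


lemma tri_int:
  fixes f g h :: "real^3 \<Rightarrow> real"
  assumes f: "f \<in> borel_measurable lebesgue" and g: "g \<in> borel_measurable lebesgue"
    and h: "h \<in> borel_measurable lebesgue" and Om: "\<Omega> \<in> sets lebesgue" and q: "q \<ge> 1"
  shows "(\<integral>\<^sup>+x\<in>\<Omega>. ennreal (\<bar>f x - h x\<bar> powr q) \<partial>lebesgue) \<le>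
    ennreal (2 powr (q - 1)) * ((\<integral>\<^sup>+x\<in>\<Omega>. ennreal (\<bar>f x - g x\<bar> powr q) \<partial>lebesgue) +
                              (\<integral>\<^sup>+x\<in>\<Omega>. ennreal (\<bar>g x - h x\<bar> powr q) \<partial>lebesgue))"
proof -
  have "(\<integral>\<^sup>+x\<in>\<Omega>. ennreal (\<bar>f x - h x\<bar> powr q) \<partial>lebesgue) \<le>
     (\<integral>\<^sup>+x. ennreal (2 powr (q - 1)) * (ennreal (\<bar>f x - g x\<bar> powr q) * indicator \<Omega> x +
        ennreal (\<bar>g x - h x\<bar> powr q) * indicator \<Omega> x) \<partial>lebesgue)"
  proof (rule nn_integral_mono)
    fix x
    have "\<bar>f x - h x\<bar> powr q = \<bar>(f x - g x) + (g x - h x)\<bar> powr q" by simp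
    also have "\<dots> \<le> 2 powr (q - 1) * (\<bar>f x - g x\<bar> powr q + \<bar>g x - h x\<bar> powr q)"
      by (rule two_pow[OF q])
    finally have "ennreal (\<bar>f x - h x\<bar> powr q) \<le> ennreal (2 powr (q - 1)) * (ennreal (\<bar>f x - g x\<bar> powr q) + ennreal (\<bar>g x - h x\<bar> powr q))"
      by (simp add: ennreal_mult[symmetric] ennreal_plus[symmetric] ennreal_leI del: ennreal_plus)
    then show "ennreal (\<bar>f x - h x\<bar> powr q) * indicator \<Omega> x \<le> ennreal (2 powr (q - 1)) *
       (ennreal (\<bar>f x - g x\<bar> powr q) * indicator \<Omega> x + ennreal (\<bar>g x - h x\<bar> powr q) * indicator \<Omega> x)"
      by (cases "x \<in> \<Omega>") auto
  qed
  also have "\<dots> = ennreal (2 powr (q - 1)) * ((\<integral>\<^sup>+x\<in>\<Omega>. ennreal (\<bar>f x - g x\<bar> powr q) \<partial>lebesgue) +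
                              (\<integral>\<^sup>+x\<in>\<Omega>. ennreal (\<bar>g x - h x\<bar> powr q) \<partial>lebesgue))"
    using f g h Om by (simp add: nn_integral_cmult nn_integral_add)
  finally show ?thesis .
qed

definition clampM :: "real \<Rightarrow> real \<Rightarrow> real" where
  "clampM M t = max (- M) (min M t)"

lemma clamp_bound:
  assumes "0 \<le> l" "l \<le> 1" "0 \<le> M"
  shows "\<bar>clampM M t * l - t\<bar> \<le> \<bar>t\<bar>"
proof -
  have "0 \<le> clampM M t * l \<and> clampM M t * l \<le> t \<or> t \<le> clampM M t * l \<and> clampM M t * l \<le> 0"
  proof (cases "t \<ge> 0")
    case True
    then have "0 \<le> clampM M t" "clampM M t \<le> t" using assms unfolding clampM_def by auto
    then show ?thesis using assms by (metis mult_left_le mult_nonneg_nonneg order_trans)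
  next
    case False
    then have "clampM M t \<le> 0" "t \<le> clampM M t" using assms unfolding clampM_def by auto
    have m1: "clampM M t * l \<le> 0" using \<open>clampM M t \<le> 0\<close> assms by (simp add: mult_nonpos_nonneg)
    have "clampM M t * (l - 1) \<ge> 0" using \<open>clampM M t \<le> 0\<close> assms by (intro mult_nonpos_nonpos) auto
    then have "t \<le> clampM M t * l" using \<open>t \<le> clampM M t\<close> by (simp add: algebra_simps)
    with m1 have "clampM M t * l \<le> 0" "t \<le> clampM M t * l" by auto
    then show ?thesis by simp
  qed
  then show ?thesis by auto
qed

lemma clamp_abs: "0 \<le> M \<Longrightarrow> \<bar>clampM M t\<bar> \<le> M"
  unfolding clampM_def by auto

lemma clamp_eq: "\<bar>t\<bar> \<le> M \<Longrightarrow> clampM M t = t"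
  unfolding clampM_def by auto

lemma clamp_cont: "continuous_on UNIV (clampM M)"
  unfolding clampM_def by (intro continuous_intros)

lemma approx:
  fixes v :: "real^3 \<Rightarrow> real"
  assumes op: "open \<Omega>" and bd: "bounded \<Omega>" and q: "q \<ge> 1" and v: "in_Lq \<Omega> q v" and a: "a > 0"
  obtains \<phi> \<delta>0 where "continuous_on UNIV \<phi>" "\<delta>0 > 0" "\<And>x. infdist x (- \<Omega>) \<le> \<delta>0 \<Longrightarrow> \<phi> x = 0"
     "(\<integral>\<^sup>+x\<in>\<Omega>. ennreal (\<bar>\<phi> x - v x\<bar> powr q) \<partial>lebesgue) \<le> ennreal a"
proof -
  have Om: "\<Omega> \<in> sets lebesgue" using op by simp
  have finO: "emeasure lebesgue \<Omega> < \<infinity>"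
    using emeasure_bounded_finite[OF bd] op by (simp add: emeasure_completion borel_open)
  define v' where "v' x = (if x \<in> \<Omega> then v x else 0)" for x
  have mv': "v' \<in> borel_measurable lebesgue"
    unfolding v'_def by (rule borel_measurable_if_I) (use v Om in \<open>auto simp: in_Lq_def\<close>)
  have eqv: "(\<integral>\<^sup>+x\<in>\<Omega>. ennreal (\<bar>f x - v x\<bar> powr q) \<partial>lebesgue) = (\<integral>\<^sup>+x\<in>\<Omega>. ennreal (\<bar>f x - v' x\<bar> powr q) \<partial>lebesgue)" for f
    by (rule nn_integral_cong) (auto simp: v'_def indicator_def)
  have Iv: "(\<integral>\<^sup>+x. ennreal (\<bar>v' x\<bar> powr q) * indicator \<Omega> x \<partial>lebesgue) < \<infinity>"
  proof -
    have "(\<integral>\<^sup>+x. ennreal (\<bar>v' x\<bar> powr q) * indicator \<Omega> x \<partial>lebesgue) = (\<integral>\<^sup>+x\<in>\<Omega>. ennreal (\<bar>v x\<bar> powr q) \<partial>lebesgue)"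
      by (rule nn_integral_cong) (auto simp: v'_def indicator_def)
    then show ?thesis using v unfolding in_Lq_def by simp
  qed
  have cne: "- \<Omega> \<noteq> {}"
  proof
    assume "- \<Omega> = {}"
    then have "\<Omega> = UNIV" by auto
    then show False using bd by simp
  qed
  have ccl: "closed (- \<Omega>)" using op by (simp add: closed_Compl)
  define d where "d x = infdist x (- \<Omega>)" for x
  have dcont: "continuous_on UNIV d" unfolding d_def by (intro continuous_intros)
  have dpos: "x \<in> \<Omega> \<Longrightarrow> d x > 0" for x unfolding d_def by (rule infdist_pos_not_in_closed[OF ccl cne]) simp
  define \<psi> where "\<psi> M x = min 1 (max 0 (real M * d x - 1))" for M :: nat and x
  have \<psi>cont: "continuous_on UNIV (\<psi> M)" for M unfolding \<psi>_def by (intro continuous_intros dcont)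
  have \<psi>01: "0 \<le> \<psi> M x" "\<psi> M x \<le> 1" for M x unfolding \<psi>_def by auto
  have \<psi>0: "d x \<le> 1 / real M \<Longrightarrow> M > 0 \<Longrightarrow> \<psi> M x = 0" for M x
    unfolding \<psi>_def by (auto simp: field_simps)
  define T where "T M x = clampM (real M) (v' x) * \<psi> M x" for M :: nat and x
  have mclamp: "(\<lambda>x. clampM M (f x)) \<in> borel_measurable lebesgue" if "f \<in> borel_measurable lebesgue" for f M
    unfolding clampM_def using that by measurable
  have m\<psi>: "\<psi> M \<in> borel_measurable lebesgue" for M
    using \<psi>cont[of M] by (simp add: borel_measurable_continuous_onI measurable_completion)
  have mT: "T M \<in> borel_measurable lebesgue" for M
    unfolding T_def using mclamp[OF mv'] m\<psi>[of M] by measurable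
  have S1: "(\<lambda>m. \<integral>\<^sup>+x. ennreal (\<bar>T m x - v' x\<bar> powr q) * indicator \<Omega> x \<partial>lebesgue) \<longlonglongrightarrow>
      (\<integral>\<^sup>+(x::real^3). 0 \<partial>lebesgue)"
  proof -
    define uu where "uu m x = ennreal (\<bar>T m x - v' x\<bar> powr q) * indicator \<Omega> x" for m x
    define ww where "ww x = ennreal (\<bar>v' x\<bar> powr q) * indicator \<Omega> x" for x
    have "(\<lambda>m. \<integral>\<^sup>+x. uu m x \<partial>lebesgue) \<longlonglongrightarrow> (\<integral>\<^sup>+(x::real^3). 0 \<partial>lebesgue)"
    proof (rule nn_integral_dominated_convergence[where w = ww])
      show "uu m \<in> borel_measurable lebesgue" for m unfolding uu_def
        using mT[of m] mv' Om by measurable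
      show "ww \<in> borel_measurable lebesgue" unfolding ww_def using mv' Om by measurable
      show "(\<lambda>x. 0::ennreal) \<in> borel_measurable lebesgue" by simp
      show "(\<integral>\<^sup>+x. ww x \<partial>lebesgue) < \<infinity>" unfolding ww_def by (rule Iv)
      show "AE x in lebesgue. uu m x \<le> ww x" for m unfolding uu_def ww_def
      proof (rule AE_I2)
        fix x
        have "\<bar>T m x - v' x\<bar> \<le> \<bar>v' x\<bar>" unfolding T_def by (rule clamp_bound) (use \<psi>01 in auto)
        then have "\<bar>T m x - v' x\<bar> powr q \<le> \<bar>v' x\<bar> powr q" using q by (intro powr_mono2) auto
        then show "ennreal (\<bar>T m x - v' x\<bar> powr q) * indicator \<Omega> x \<le> ennreal (\<bar>v' x\<bar> powr q) * indicator \<Omega> x"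
          by (cases "x \<in> \<Omega>") (auto intro: ennreal_leI)
      qed
      show "AE x in lebesgue. (\<lambda>m. uu m x) \<longlonglongrightarrow> 0" unfolding uu_def
      proof (rule AE_I2)
        fix x
        show "(\<lambda>M. ennreal (\<bar>T M x - v' x\<bar> powr q) * indicator \<Omega> x) \<longlonglongrightarrow> 0"
        proof (cases "x \<in> \<Omega>")
          case False then show ?thesis by simp
        next
          case True
          have dx: "d x > 0" using dpos[OF True] .
          obtain N :: nat where N0: "max \<bar>v' x\<bar> (2 / d x) \<le> real N" using real_arch_simple by blast
          then have N: "real N \<ge> \<bar>v' x\<bar>" "real N \<ge> 2 / d x" by auto
          have "eventually (\<lambda>M. ennreal (\<bar>T M x - v' x\<bar> powr q) * indicator \<Omega> x = 0) sequentially"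
            unfolding eventually_sequentially
          proof (intro exI allI impI)
            fix M assume M: "N \<le> M"
            then have "real M \<ge> \<bar>v' x\<bar>" "real M \<ge> 2 / d x" using N by (auto intro: order_trans)
            then have "clampM (real M) (v' x) = v' x" "\<psi> M x = 1"
              using dx unfolding \<psi>_def by (auto simp: clamp_eq field_simps)
            then show "ennreal (\<bar>T M x - v' x\<bar> powr q) * indicator \<Omega> x = 0" unfolding T_def by simp
          qed
          then show ?thesis by (rule tendsto_eventually)
        qed
      qed
    qed
    then show ?thesis unfolding uu_def .
  qed
  then have S1': "(\<lambda>M. \<integral>\<^sup>+x. ennreal (\<bar>T M x - v' x\<bar> powr q) * indicator \<Omega> x \<partial>lebesgue) \<longlonglongrightarrow> 0" by simp
  define a' where "a' = a / 2 powr q"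
  have a': "a' > 0" using a unfolding a'_def by simp
  have "eventually (\<lambda>M. (\<integral>\<^sup>+x. ennreal (\<bar>T M x - v' x\<bar> powr q) * indicator \<Omega> x \<partial>lebesgue) < ennreal a') sequentially"
    by (rule order_tendstoD(2)[OF S1']) (use a' in simp)
  then obtain M :: nat where M: "M \<ge> 1" "(\<integral>\<^sup>+x. ennreal (\<bar>T M x - v' x\<bar> powr q) * indicator \<Omega> x \<partial>lebesgue) < ennreal a'"
    unfolding eventually_sequentially by (metis le_add2 nat_le_linear)
  have "v' measurable_on \<Omega>" by (rule lebesgue_measurable_imp_measurable_on_real[OF mv' Om])
  then obtain N g where N: "negligible N" and gc: "\<And>n. continuous_on UNIV (g n)"
    and gl: "\<And>x. x \<notin> N \<Longrightarrow> (\<lambda>n. g n x) \<longlonglongrightarrow> (if x \<in> \<Omega> then v' x else 0)"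
    unfolding measurable_on_def by blast
  define \<phi> where "\<phi> n x = clampM (real M) (g n x) * \<psi> M x" for n x
  have \<phi>c: "continuous_on UNIV (\<phi> n)" for n
    unfolding \<phi>_def by (intro continuous_intros continuous_on_compose2[OF clamp_cont gc] \<psi>cont) auto
  have m\<phi>: "\<phi> n \<in> borel_measurable lebesgue" for n
    using \<phi>c[of n] by (simp add: borel_measurable_continuous_onI measurable_completion)
  have S2: "(\<lambda>n. \<integral>\<^sup>+x. ennreal (\<bar>\<phi> n x - T M x\<bar> powr q) * indicator \<Omega> x \<partial>lebesgue) \<longlonglongrightarrow>
      (\<integral>\<^sup>+(x::real^3). 0 \<partial>lebesgue)"
  proof (rule nn_integral_dominated_convergence[where w = "\<lambda>x. ennreal ((2 * real M) powr q) * indicator \<Omega> x"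
      and u = "\<lambda>n x. ennreal (\<bar>\<phi> n x - T M x\<bar> powr q) * indicator \<Omega> x" and u' = "\<lambda>x. 0"])
    show "(\<lambda>x. ennreal (\<bar>\<phi> n x - T M x\<bar> powr q) * indicator \<Omega> x) \<in> borel_measurable lebesgue" for n
      using mT[of M] m\<phi>[of n] Om by measurable
    show "(\<lambda>x. ennreal ((2 * real M) powr q) * indicator \<Omega> x) \<in> borel_measurable lebesgue"
      using Om by measurable
    show "(\<lambda>x. 0::ennreal) \<in> borel_measurable lebesgue" by simp
    show "(\<integral>\<^sup>+x. ennreal ((2 * real M) powr q) * indicator \<Omega> x \<partial>lebesgue) < \<infinity>"
      using Om finO by (simp add: nn_integral_cmult_indicator ennreal_mult_less_top)
    show "AE x in lebesgue. ennreal (\<bar>\<phi> n x - T M x\<bar> powr q) * indicator \<Omega> x \<le> ennreal ((2 * real M) powr q) * indicator \<Omega> x" for n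
    proof (rule AE_I2)
      fix x
      have "\<bar>clampM (real M) (g n x)\<bar> \<le> real M" "\<bar>clampM (real M) (v' x)\<bar> \<le> real M" by (auto intro: clamp_abs)
      moreover have "\<bar>c * \<psi> M x\<bar> \<le> real M" if "\<bar>c\<bar> \<le> real M" for c
      proof -
        have "\<bar>c * \<psi> M x\<bar> = \<bar>c\<bar> * \<psi> M x" using \<psi>01[of M x] by (simp add: abs_mult)
        also have "\<dots> \<le> real M * 1" using that \<psi>01[of M x] by (intro mult_mono) auto
        finally show ?thesis by simp
      qed
      ultimately have "\<bar>\<phi> n x\<bar> \<le> real M" "\<bar>T M x\<bar> \<le> real M"
        unfolding \<phi>_def T_def by blast+
      then have "\<bar>\<phi> n x - T M x\<bar> \<le> 2 * real M" by linarith
      then have "\<bar>\<phi> n x - T M x\<bar> powr q \<le> (2 * real M) powr q" using q by (intro powr_mono2) auto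
      then show "ennreal (\<bar>\<phi> n x - T M x\<bar> powr q) * indicator \<Omega> x \<le> ennreal ((2 * real M) powr q) * indicator \<Omega> x"
        by (cases "x \<in> \<Omega>") (auto intro: ennreal_leI)
    qed
    have "AE x in lebesgue. x \<notin> N" using N by (intro AE_not_in) (simp add: negligible_iff_null_sets)
    then show "AE x in lebesgue. (\<lambda>n. ennreal (\<bar>\<phi> n x - T M x\<bar> powr q) * indicator \<Omega> x) \<longlonglongrightarrow> 0"
    proof eventually_elim
      case (elim x)
      show ?case
      proof (cases "x \<in> \<Omega>")
        case False then show ?thesis by simp
      next
        case True
        have "(\<lambda>n. g n x) \<longlonglongrightarrow> v' x" using gl[OF elim] True by simp
        then have "(\<lambda>n. clampM (real M) (g n x)) \<longlonglongrightarrow> clampM (real M) (v' x)"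
          unfolding clampM_def by (intro tendsto_intros)
        then have "(\<lambda>n. \<phi> n x) \<longlonglongrightarrow> T M x" unfolding \<phi>_def T_def by (intro tendsto_intros)
        then have "(\<lambda>n. \<bar>\<phi> n x - T M x\<bar>) \<longlonglongrightarrow> 0"
          by (metis (no_types) LIM_zero tendsto_rabs_zero)
        then have "(\<lambda>n. \<bar>\<phi> n x - T M x\<bar> powr q) \<longlonglongrightarrow> 0"
          using q by (intro tendsto_zero_powrI) auto
        then have "(\<lambda>n. ennreal (\<bar>\<phi> n x - T M x\<bar> powr q)) \<longlonglongrightarrow> ennreal 0" by (rule tendsto_ennrealI)
        then show ?thesis using True by simp
      qed
    qed
  qed
  then have S2': "(\<lambda>n. \<integral>\<^sup>+x. ennreal (\<bar>\<phi> n x - T M x\<bar> powr q) * indicator \<Omega> x \<partial>lebesgue) \<longlonglongrightarrow> 0" by simp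
  have "eventually (\<lambda>n. (\<integral>\<^sup>+x. ennreal (\<bar>\<phi> n x - T M x\<bar> powr q) * indicator \<Omega> x \<partial>lebesgue) < ennreal a') sequentially"
    by (rule order_tendstoD(2)[OF S2']) (use a' in simp)
  then obtain n where n: "(\<integral>\<^sup>+x. ennreal (\<bar>\<phi> n x - T M x\<bar> powr q) * indicator \<Omega> x \<partial>lebesgue) < ennreal a'"
    unfolding eventually_sequentially by blast
  have "(\<integral>\<^sup>+x\<in>\<Omega>. ennreal (\<bar>\<phi> n x - v x\<bar> powr q) \<partial>lebesgue) = (\<integral>\<^sup>+x\<in>\<Omega>. ennreal (\<bar>\<phi> n x - v' x\<bar> powr q) \<partial>lebesgue)"
    by (rule eqv)
  also have "\<dots> \<le> ennreal (2 powr (q - 1)) * ((\<integral>\<^sup>+x\<in>\<Omega>. ennreal (\<bar>\<phi> n x - T M x\<bar> powr q) \<partial>lebesgue) +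
                              (\<integral>\<^sup>+x\<in>\<Omega>. ennreal (\<bar>T M x - v' x\<bar> powr q) \<partial>lebesgue))"
    by (rule tri_int[OF m\<phi> mT mv' Om q])
  also have "\<dots> \<le> ennreal (2 powr (q - 1)) * (ennreal a' + ennreal a')"
    using n M(2) by (intro mult_left_mono add_mono) auto
  also have "\<dots> = ennreal a"
  proof -
    have "2 powr (q - 1) * (a' + a') = a" unfolding a'_def by (simp add: powr_diff field_simps)
    then show ?thesis using a' by (simp flip: ennreal_plus ennreal_mult)
  qed
  finally have fin: "(\<integral>\<^sup>+x\<in>\<Omega>. ennreal (\<bar>\<phi> n x - v x\<bar> powr q) \<partial>lebesgue) \<le> ennreal a" .
  show ?thesis
  proof (rule that[OF \<phi>c[of n] _ _ fin])
    show "1 / real M > 0" using M(1) by simp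
    fix x assume "infdist x (- \<Omega>) \<le> 1 / real M"
    then have "\<psi> M x = 0" using \<psi>0[of x M] M(1) unfolding d_def by simp
    then show "\<phi> n x = 0" unfolding \<phi>_def by simp
  qed
qed


lemma ennreal_tendsto0I:
  fixes X :: "nat \<Rightarrow> ennreal"
  assumes "\<And>e. e > 0 \<Longrightarrow> eventually (\<lambda>n. X n \<le> ennreal e) sequentially"
  shows "X \<longlonglongrightarrow> 0"
proof (rule order_tendstoI)
  fix a :: ennreal assume "a < 0" then show "eventually (\<lambda>n. a < X n) sequentially" by simp
next
  fix a :: ennreal assume a: "0 < a"
  obtain e where e: "e > 0" "ennreal e < a"
  proof (cases "a = top")
    case True then show ?thesis using that[of 1] by simp
  next
    case False
    then obtain r where r: "a = ennreal r" "r \<ge> 0" by (cases a) auto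
    then have "r > 0" using a by simp
    then show ?thesis using that[of "r / 2"] r by (simp add: ennreal_less_iff)
  qed
  show "eventually (\<lambda>n. X n < a) sequentially"
    using assms[OF e(1)] by eventually_elim (use e in auto)
qed

lemma final_abstract:
  fixes v :: "real^3 \<Rightarrow> real" and R w :: "nat \<Rightarrow> real^3 \<Rightarrow> real" and h :: "nat \<Rightarrow> real"
  assumes op: "open \<Omega>" and bd: "bounded \<Omega>" and q: "q \<ge> 1" and v: "in_Lq \<Omega> q v" and B: "B \<ge> 0"
    and hn: "h \<longlonglongrightarrow> 0"
    and E: "(\<lambda>n. \<integral>\<^sup>+x\<in>\<Omega>. ennreal (\<bar>w n x - v x\<bar> powr q) \<partial>lebesgue) \<longlonglongrightarrow> 0"
    and mw: "\<And>n. w n \<in> borel_measurable lebesgue"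
    and mR: "\<And>n. R n \<in> borel_measurable lebesgue"
    and key: "\<And>n \<phi> \<epsilon>. continuous_on UNIV \<phi> \<Longrightarrow> \<epsilon> \<ge> 0 \<Longrightarrow>
        (\<And>x y. x \<in> \<Omega> \<Longrightarrow> y \<in> \<Omega> \<Longrightarrow> dist x y \<le> 4 * h n \<Longrightarrow> \<bar>\<phi> x - \<phi> y\<bar> \<le> \<epsilon>) \<Longrightarrow>
        (\<And>x. infdist x (- \<Omega>) \<le> h n \<Longrightarrow> \<phi> x = 0) \<Longrightarrow>
        (\<integral>\<^sup>+x\<in>\<Omega>. ennreal (\<bar>R n x - \<phi> x\<bar> powr q) \<partial>lebesgue) \<le>
        ennreal (2 powr (q - 1)) * (emeasure lebesgue \<Omega> * ennreal (\<epsilon> powr q) +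
          ennreal B * (\<integral>\<^sup>+x\<in>\<Omega>. ennreal (\<bar>w n x - \<phi> x\<bar> powr q) \<partial>lebesgue))"
  shows "(\<lambda>n. \<integral>\<^sup>+x\<in>\<Omega>. ennreal (\<bar>R n x - v x\<bar> powr q) \<partial>lebesgue) \<longlonglongrightarrow> 0"
proof (rule ennreal_tendsto0I)
  fix e :: real assume e: "e > 0"
  have Om: "\<Omega> \<in> sets lebesgue" using op by simp
  have finO: "emeasure lebesgue \<Omega> < \<infinity>"
    using emeasure_bounded_finite[OF bd] op by (simp add: emeasure_completion borel_open)
  define m\<Omega> where "m\<Omega> = measure lebesgue \<Omega>"
  have mO: "emeasure lebesgue \<Omega> = ennreal m\<Omega>" "m\<Omega> \<ge> 0"
    using finO unfolding m\<Omega>_def by (auto simp: emeasure_eq_ennreal_measure)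
  define K where "K = (2::real) powr (q - 1)"
  have K: "K \<ge> 1" unfolding K_def using q by (intro ge_one_powr_ge_zero) auto
  define v' where "v' x = (if x \<in> \<Omega> then v x else 0)" for x
  have mv': "v' \<in> borel_measurable lebesgue"
    unfolding v'_def by (rule borel_measurable_if_I) (use v Om in \<open>auto simp: in_Lq_def\<close>)
  have eqv: "(\<integral>\<^sup>+x\<in>\<Omega>. ennreal (\<bar>f x - v x\<bar> powr q) \<partial>lebesgue) = (\<integral>\<^sup>+x\<in>\<Omega>. ennreal (\<bar>f x - v' x\<bar> powr q) \<partial>lebesgue)" for f
    by (rule nn_integral_cong) (auto simp: v'_def indicator_def)
  define a0 where "a0 = e / (3 * (K + K * K * K * B + 1))"
  have a0: "a0 > 0" using e K B unfolding a0_def by (simp add: add_pos_nonneg)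
  obtain \<phi> \<delta>0 where \<phi>c: "continuous_on UNIV \<phi>" and \<delta>0: "\<delta>0 > 0"
    and \<phi>0: "\<And>x. infdist x (- \<Omega>) \<le> \<delta>0 \<Longrightarrow> \<phi> x = 0"
    and \<phi>v: "(\<integral>\<^sup>+x\<in>\<Omega>. ennreal (\<bar>\<phi> x - v x\<bar> powr q) \<partial>lebesgue) \<le> ennreal a0"
    using approx[OF op bd q v a0] by blast
  have m\<phi>: "\<phi> \<in> borel_measurable lebesgue"
    using \<phi>c by (simp add: borel_measurable_continuous_onI measurable_completion)
  define eq where "eq = e / (3 * (K * K * m\<Omega> + 1))"
  have eq: "eq > 0" using e K mO unfolding eq_def by (simp add: add_nonneg_pos)
  define \<epsilon> where "\<epsilon> = eq powr (1 / q)"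
  have \<epsilon>: "\<epsilon> > 0" "\<epsilon> powr q = eq" using eq q unfolding \<epsilon>_def by (auto simp: powr_powr)
  have "uniformly_continuous_on (closure \<Omega>) \<phi>"
    by (rule compact_uniformly_continuous) (use \<phi>c bd in \<open>auto intro: continuous_on_subset\<close>)
  then obtain \<delta> where \<delta>: "\<delta> > 0" and \<delta>c: "\<And>x y. x \<in> closure \<Omega> \<Longrightarrow> y \<in> closure \<Omega> \<Longrightarrow> dist y x < \<delta> \<Longrightarrow> dist (\<phi> y) (\<phi> x) < \<epsilon>"
    unfolding uniformly_continuous_on_def using \<epsilon>(1) by metis
  define t0 where "t0 = e / (3 * (K * K * K * B + 1))"
  have t0: "t0 > 0" using e K B unfolding t0_def by (simp add: add_nonneg_pos)
  have ev1: "eventually (\<lambda>n. \<bar>h n\<bar> < min (\<delta> / 4) \<delta>0) sequentially"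
    using hn \<delta> \<delta>0 by (auto simp: tendsto_iff dest!: spec[of _ "min (\<delta> / 4) \<delta>0"])
  have ev2: "eventually (\<lambda>n. (\<integral>\<^sup>+x\<in>\<Omega>. ennreal (\<bar>w n x - v x\<bar> powr q) \<partial>lebesgue) < ennreal t0) sequentially"
    by (rule order_tendstoD(2)[OF E]) (use t0 in simp)
  show "eventually (\<lambda>n. (\<integral>\<^sup>+x\<in>\<Omega>. ennreal (\<bar>R n x - v x\<bar> powr q) \<partial>lebesgue) \<le> ennreal e) sequentially"
    using ev1 ev2
  proof eventually_elim
    case (elim n)
    have hn1: "4 * h n < \<delta>" "h n \<le> \<delta>0" using elim(1) by auto
    define X where "X = (\<integral>\<^sup>+x\<in>\<Omega>. ennreal (\<bar>R n x - v' x\<bar> powr q) \<partial>lebesgue)"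
    define Y where "Y = (\<integral>\<^sup>+x\<in>\<Omega>. ennreal (\<bar>R n x - \<phi> x\<bar> powr q) \<partial>lebesgue)"
    define A where "A = (\<integral>\<^sup>+x\<in>\<Omega>. ennreal (\<bar>\<phi> x - v' x\<bar> powr q) \<partial>lebesgue)"
    define Z where "Z = (\<integral>\<^sup>+x\<in>\<Omega>. ennreal (\<bar>w n x - \<phi> x\<bar> powr q) \<partial>lebesgue)"
    define E' where "E' = (\<integral>\<^sup>+x\<in>\<Omega>. ennreal (\<bar>w n x - v' x\<bar> powr q) \<partial>lebesgue)"
    have A: "A \<le> ennreal a0" using \<phi>v eqv[of \<phi>] unfolding A_def by simp
    have E': "E' \<le> ennreal t0" using elim(2) eqv[of "w n"] unfolding E'_def by simp
    have X: "X \<le> ennreal K * (Y + A)" unfolding X_def Y_def A_def K_def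
      by (rule tri_int[OF mR m\<phi> mv' Om q])
    have close: "\<bar>\<phi> x - \<phi> y\<bar> \<le> \<epsilon>" if "x \<in> \<Omega>" "y \<in> \<Omega>" "dist x y \<le> 4 * h n" for x y
    proof -
      have "dist y x < \<delta>" using that hn1 by (simp add: dist_commute)
      then have "dist (\<phi> y) (\<phi> x) < \<epsilon>" using \<delta>c that closure_subset by blast
      then show ?thesis by (simp add: dist_real_def abs_minus_commute)
    qed
    have Y: "Y \<le> ennreal K * (ennreal m\<Omega> * ennreal eq + ennreal B * Z)"
      using key[OF \<phi>c less_imp_le[OF \<epsilon>(1)] close \<phi>0] hn1(2) \<epsilon>(2) mO
      unfolding Y_def Z_def K_def by (auto intro: order_trans)
    have AA: "(\<integral>\<^sup>+x\<in>\<Omega>. ennreal (\<bar>v' x - \<phi> x\<bar> powr q) \<partial>lebesgue) = A"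
      unfolding A_def by (simp add: abs_minus_commute)
    have Z: "Z \<le> ennreal K * (E' + A)"
      using tri_int[OF mw mv' m\<phi> Om q, of n] AA unfolding Z_def E'_def K_def by simp
    have "X \<le> ennreal K * (ennreal K * (ennreal m\<Omega> * ennreal eq + ennreal B * (ennreal K * (E' + A))) + A)"
      using X Y Z by (meson add_mono order_refl mult_left_mono order_trans zero_le)
    also have "\<dots> \<le> ennreal K * (ennreal K * (ennreal m\<Omega> * ennreal eq + ennreal B * (ennreal K * (ennreal t0 + ennreal a0))) + ennreal a0)"
      using A E' by (intro add_mono mult_left_mono order_refl) auto
    also have "\<dots> = ennreal (K * (K * (m\<Omega> * eq + B * (K * (t0 + a0))) + a0))"
      using K B mO(2) eq t0 a0 by (simp add: ennreal_mult ennreal_plus)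
    also have "\<dots> \<le> ennreal e"
    proof (rule ennreal_leI)
      have "K * K * m\<Omega> * eq \<le> e / 3"
      proof -
        have "K * K * m\<Omega> * eq = e / 3 * (K * K * m\<Omega> / (K * K * m\<Omega> + 1))"
          unfolding eq_def using K mO(2) by (simp add: field_simps)
        also have "\<dots> \<le> e / 3 * 1"
        proof (intro mult_left_mono)
          have "K * K * m\<Omega> \<ge> 0" using K mO(2) by simp
          then show "K * K * m\<Omega> / (K * K * m\<Omega> + 1) \<le> 1" by simp
        qed (use e in simp)
        finally show ?thesis by simp
      qed
      moreover have "K * K * K * B * t0 \<le> e / 3"
      proof -
        have "K * K * K * B * t0 = e / 3 * (K * K * K * B / (K * K * K * B + 1))"
          unfolding t0_def using K B by (simp add: field_simps)
        also have "\<dots> \<le> e / 3 * 1"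
        proof (intro mult_left_mono)
          have "K * K * K * B \<ge> 0" using K B by simp
          then show "K * K * K * B / (K * K * K * B + 1) \<le> 1" by simp
        qed (use e in simp)
        finally show ?thesis by simp
      qed
      moreover have "(K * K * K * B + K) * a0 \<le> e / 3"
      proof -
        have "(K * K * K * B + K) * a0 = e / 3 * ((K * K * K * B + K) / (K + K * K * K * B + 1))"
          unfolding a0_def using K B by (simp add: field_simps)
        also have "\<dots> \<le> e / 3 * 1"
        proof (intro mult_left_mono)
          have "K * K * K * B + K \<ge> 0" using K B by simp
          then show "(K * K * K * B + K) / (K + K * K * K * B + 1) \<le> 1" by (simp add: field_simps)
        qed (use e in simp)
        finally show ?thesis by simp
      qed
      ultimately show "K * (K * (m\<Omega> * eq + B * (K * (t0 + a0))) + a0) \<le> e"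
        by (simp add: algebra_simps)
    qed
    finally show ?case using eqv[of "R n"] unfolding X_def by simp
  qed
qed


lemma REE_ii:
  assumes "in_H0 \<Omega> G i u"
  shows "R_EE \<Omega> G i i u x = disc_fun \<Omega> G i u x"
proof -
  have "R_EE \<Omega> G i i u x = (\<Sum>f\<in>int_faces \<Omega> G i. u f * indicator (dual \<Omega> G i f) x)"
    unfolding R_EE_def R_EE_val_def by simp
  also have "\<dots> = (\<Sum>f\<in>faces \<Omega> G i. u f * indicator (dual \<Omega> G i f) x)"
    by (rule sum.mono_neutral_left[OF finite_faces])
       (use assms in \<open>auto simp: int_faces_def faces_def in_H0_def\<close>)
  finally show ?thesis unfolding disc_fun_def .
qed

theorem lemma7p2:
  fixes \<Omega> :: "(real^3) set" and G :: "nat \<Rightarrow> grid" and \<eta> q :: real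
    and i j :: 3 and v :: "real^3 \<Rightarrow> real"
  assumes "MAC_compatible \<Omega>" and "\<Omega> \<noteq> {}"
    and "\<forall>n. is_MAC_grid \<Omega> (G n)"
    and "(\<lambda>n. hM \<Omega> (G n)) \<longlonglongrightarrow> 0"
    and "\<eta> > 0" and "\<forall>n. etaM \<Omega> (G n) \<ge> \<eta>"
    and "1 \<le> q"
    and "in_Lq \<Omega> q v"
  shows "(\<forall>u. (\<forall>n. in_H0 \<Omega> (G n) i (u n)) \<longrightarrow>
              Lq_conv \<Omega> q (\<lambda>n. disc_fun \<Omega> (G n) i (u n)) v \<longrightarrow>
              Lq_conv \<Omega> q (\<lambda>n. R_EE \<Omega> (G n) i j (u n)) v)
       \<and> (\<forall>u. Lq_conv \<Omega> q (\<lambda>n. disc_fun \<Omega> (G n) i (u n)) v \<longrightarrow>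
              Lq_conv \<Omega> q (\<lambda>n. R_M \<Omega> (G n) i (u n)) v)"
proof -
  note mac = assms(1) and ne = assms(2) and G = assms(3) and hn = assms(4) and eta = assms(5,6)
    and q = assms(7) and v = assms(8)
  have op: "open \<Omega>" and bd: "bounded \<Omega>" using mac unfolding MAC_compatible_def by auto
  have Om: "\<Omega> \<in> sets lebesgue" using op by simp
  have cm: "continuous_on UNIV \<phi> \<Longrightarrow> \<phi> \<in> borel_measurable lebesgue" for \<phi> :: "real^3 \<Rightarrow> real"
    by (simp add: borel_measurable_continuous_onI measurable_completion)
  have A: "Lq_conv \<Omega> q (\<lambda>n. R_EE \<Omega> (G n) i j (u n)) v"
    if H0: "\<forall>n. in_H0 \<Omega> (G n) i (u n)" and cv: "Lq_conv \<Omega> q (\<lambda>n. disc_fun \<Omega> (G n) i (u n)) v" for u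
  proof (cases "i = j")
    case True
    have "(\<lambda>n. R_EE \<Omega> (G n) i j (u n)) = (\<lambda>n. disc_fun \<Omega> (G n) i (u n))"
      using REE_ii H0 True by (auto simp: fun_eq_iff)
    then show ?thesis using cv by simp
  next
    case False
    show ?thesis unfolding Lq_conv_def
    proof (rule final_abstract[OF op bd q v _ hn, where B = "1 + 1 / \<eta>"])
      show "0 \<le> 1 + 1 / \<eta>" using eta by simp
      show "(\<lambda>n. \<integral>\<^sup>+x\<in>\<Omega>. ennreal (\<bar>disc_fun \<Omega> (G n) i (u n) x - v x\<bar> powr q) \<partial>lebesgue) \<longlonglongrightarrow> 0"
        using cv unfolding Lq_conv_def .
      show "disc_fun \<Omega> (G n) i (u n) \<in> borel_measurable lebesgue" for n by (rule disc_meas)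
      show "R_EE \<Omega> (G n) i j (u n) \<in> borel_measurable lebesgue" for n by (rule REE_meas)
      fix n and \<phi> :: "real^3 \<Rightarrow> real" and \<epsilon> :: real
      assume \<phi>c: "continuous_on UNIV \<phi>" and \<epsilon>: "\<epsilon> \<ge> 0"
        and close: "\<And>x y. x \<in> \<Omega> \<Longrightarrow> y \<in> \<Omega> \<Longrightarrow> dist x y \<le> 4 * hM \<Omega> (G n) \<Longrightarrow> \<bar>\<phi> x - \<phi> y\<bar> \<le> \<epsilon>"
        and van: "\<And>x. infdist x (- \<Omega>) \<le> hM \<Omega> (G n) \<Longrightarrow> \<phi> x = 0"
      show "(\<integral>\<^sup>+x\<in>\<Omega>. ennreal (\<bar>R_EE \<Omega> (G n) i j (u n) x - \<phi> x\<bar> powr q) \<partial>lebesgue) \<le>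
        ennreal (2 powr (q - 1)) * (emeasure lebesgue \<Omega> * ennreal (\<epsilon> powr q) +
          ennreal (1 + 1 / \<eta>) * (\<integral>\<^sup>+x\<in>\<Omega>. ennreal (\<bar>disc_fun \<Omega> (G n) i (u n) x - \<phi> x\<bar> powr q) \<partial>lebesgue))"
        by (rule key_REE[OF G[rule_format] op ne q \<epsilon> False eta(1) eta(2)[rule_format] cm[OF \<phi>c] close van])
    qed
  qed
  have B: "Lq_conv \<Omega> q (\<lambda>n. R_M \<Omega> (G n) i (u n)) v"
    if cv: "Lq_conv \<Omega> q (\<lambda>n. disc_fun \<Omega> (G n) i (u n)) v" for u
    unfolding Lq_conv_def
  proof (rule final_abstract[OF op bd q v _ hn, where B = 1])
    show "0 \<le> (1::real)" by simp
    show "(\<lambda>n. \<integral>\<^sup>+x\<in>\<Omega>. ennreal (\<bar>disc_fun \<Omega> (G n) i (u n) x - v x\<bar> powr q) \<partial>lebesgue) \<longlonglongrightarrow> 0"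
      using cv unfolding Lq_conv_def .
    show "disc_fun \<Omega> (G n) i (u n) \<in> borel_measurable lebesgue" for n by (rule disc_meas)
    show "R_M \<Omega> (G n) i (u n) \<in> borel_measurable lebesgue" for n by (rule RM_meas)
    fix n and \<phi> :: "real^3 \<Rightarrow> real" and \<epsilon> :: real
    assume \<phi>c: "continuous_on UNIV \<phi>" and \<epsilon>: "\<epsilon> \<ge> 0"
      and close: "\<And>x y. x \<in> \<Omega> \<Longrightarrow> y \<in> \<Omega> \<Longrightarrow> dist x y \<le> 4 * hM \<Omega> (G n) \<Longrightarrow> \<bar>\<phi> x - \<phi> y\<bar> \<le> \<epsilon>"
      and van: "\<And>x. infdist x (- \<Omega>) \<le> hM \<Omega> (G n) \<Longrightarrow> \<phi> x = 0"
    show "(\<integral>\<^sup>+x\<in>\<Omega>. ennreal (\<bar>R_M \<Omega> (G n) i (u n) x - \<phi> x\<bar> powr q) \<partial>lebesgue) \<le>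
      ennreal (2 powr (q - 1)) * (emeasure lebesgue \<Omega> * ennreal (\<epsilon> powr q) +
        ennreal 1 * (\<integral>\<^sup>+x\<in>\<Omega>. ennreal (\<bar>disc_fun \<Omega> (G n) i (u n) x - \<phi> x\<bar> powr q) \<partial>lebesgue))"
      using key_RM[OF G[rule_format] Om q \<epsilon> cm[OF \<phi>c] close] by simp
  qed
  show ?thesis using A B by blast
qed


end
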